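(* In the boundary-driven switching system with $\epsilon=0$, $\gamma>0$, $N\ge2$, writing $D=1+N+2N\gamma$, for all $x\in V$ $$\theta_0(x)=\tfrac{1+\gamma}{1+2\gamma}\Big[\Big(\tfrac{(1+N)+(1+2N)\gamma}{D}-\tfrac{1+2\gamma}{D}x\Big)\rho_{L,0}+\Big(\tfrac{-\gamma}{D}+\tfrac{1+2\gamma}{D}x\Big)\rho_{R,0}\Big]+\tfrac{\gamma}{1+2\gamma}\Big[\Big(\tfrac{(1+N)+(1+2N)\gamma}{D}-\tfrac{1+2\gamma}{D}x\Big)\rho_{L,1}+\Big(\tfrac{-\gamma}{D}+\tfrac{1+2\gamma}{D}x\Big)\rho_{R,1}\Big],$$ and $$\theta_1(1)=\tfrac{\gamma}{1+\gamma}\theta_0(1)+\tfrac1{1+\gamma}\rho_{L,1},\qquad \theta_1(x)=\theta_0(x)\ (x\in\{2,\dots,N-1\}),\qquad \theta_1(N)=\tfrac{\gamma}{1+\gamma}\theta_0(N)+\tfrac1{1+\gamma}\rho_{R,1}.$$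
   Context: Boundary-driven switching system: fix $\sigma\in\{-1,0,1\}$, $N\in\mathbb N$, $V=\{1,\dots,N\}$, $\epsilon\in[0,1]$, $\gamma>0$, and reservoir parameters $\rho_{L,0},\rho_{L,1},\rho_{R,0},\rho_{R,1}\ge0$ (in $[0,1]$ if $\sigma=-1$). Configurations are $\eta=(\eta_0(x),\eta_1(x))_{x\in V}$ with values in $\{0,1\}$ if $\sigma=-1$ and in $\mathbb N_0$ if $\sigma\in\{0,1\}$. Writing $\delta_{(x,i)}$ for one particle at site $x$ in layer $i$, the continuous-time Markov chain has transitions: for $x\in\{1,\dots,N-1\}$, $i\in\{0,1\}$, $\eta\to\eta-\delta_{(x,i)}+\delta_{(x+1,i)}$ at rate $\epsilon^i\eta_i(x)(1+\sigma\eta_i(x+1))$ and $\eta\to\eta-\delta_{(x+1,i)}+\delta_{(x,i)}$ at rate $\epsilon^i\eta_i(x+1)(1+\sigma\eta_i(x))$ ($\epsilon^0=1$); for $x\in V$, $\eta\to\eta-\delta_{(x,i)}+\delta_{(x,1-i)}$ at rate $\gamma\eta_i(x)(1+\sigma\eta_{1-i}(x))$; and for $i\in\{0,1\}$, $\eta\to\eta-\delta_{(1,i)}$ at rate $\eta_i(1)(1+\sigma\rho_{L,i})$, $\eta\to\eta+\delta_{(1,i)}$ at rate $\rho_{L,i}(1+\sigma\eta_i(1))$, $\eta\to\eta-\delta_{(N,i)}$ at rate $\eta_i(N)(1+\sigma\rho_{R,i})$, $\eta\to\eta+\delta_{(N,i)}$ at rate $\rho_{R,i}(1+\sigma\eta_i(N))$.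 This chain has a unique stationary distribution $\mu_{stat}$, and $\theta_i(x):=\mathbb E_{\mu_{stat}}[\eta_i(x)]$ is the stationary microscopic profile. *)

theory Defs
  imports "HOL-Analysis.Analysis"
begin

text \<open>A configuration maps (layer i, site x) to the number of particles eta_i(x).\<close>
type_synonym conf = "nat \<times> nat \<Rightarrow> nat"

definition Conf :: "int \<Rightarrow> nat \<Rightarrow> conf set" where
  "Conf \<sigma> N = {\<eta>. (\<forall>i x. (i \<ge> 2 \<or> x < 1 \<or> x > N) \<longrightarrow> \<eta> (i, x) = 0)
                   \<and> (\<sigma> = -1 \<longrightarrow> (\<forall>p. \<eta> p \<le> 1))}"

definition addp :: "nat \<Rightarrow> nat \<Rightarrow> conf \<Rightarrow> conf" where
  "addp i x \<eta> = \<eta>((i, x) := \<eta> (i, x) + 1)"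

definition remp :: "nat \<Rightarrow> nat \<Rightarrow> conf \<Rightarrow> conf" where
  "remp i x \<eta> = \<eta>((i, x) := \<eta> (i, x) - 1)"

text \<open>Elementary moves:
  HopR i x : particle in layer i from x to x+1;
  HopL i x : particle in layer i from x+1 to x;
  Switch i x : particle at site x from layer i to layer 1-i;
  OutL i, InL i, OutR i, InR i : boundary removal / injection at site 1 resp. N.\<close>
datatype move = HopR nat nat | HopL nat nat | Switch nat nat
  | OutL nat | InL nat | OutR nat | InR nat

definition moves :: "nat \<Rightarrow> move set" where
  "moves N = (\<Union>i\<in>{0,1}. (\<Union>x\<in>{1..N-1}. {HopR i x, HopL i x})
                        \<union> (\<Union>x\<in>{1..N}. {Switch i x})
                        \<union> {OutL i, InL i, OutR i, InR i})"

fun apply_move :: "nat \<Rightarrow> move \<Rightarrow> conf \<Rightarrow> conf" where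
  "apply_move N (HopR i x) \<eta> = addp i (x+1) (remp i x \<eta>)"
| "apply_move N (HopL i x) \<eta> = addp i x (remp i (x+1) \<eta>)"
| "apply_move N (Switch i x) \<eta> = addp (1 - i) x (remp i x \<eta>)"
| "apply_move N (OutL i) \<eta> = remp i 1 \<eta>"
| "apply_move N (InL i) \<eta> = addp i 1 \<eta>"
| "apply_move N (OutR i) \<eta> = remp i N \<eta>"
| "apply_move N (InR i) \<eta> = addp i N \<eta>"

fun move_rate :: "int \<Rightarrow> nat \<Rightarrow> real \<Rightarrow> real \<Rightarrow> (nat \<Rightarrow> real) \<Rightarrow> (nat \<Rightarrow> real)
                   \<Rightarrow> move \<Rightarrow> conf \<Rightarrow> real" where
  "move_rate \<sigma> N \<epsilon> \<gamma> rL rR (HopR i x) \<eta> =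
     \<epsilon> ^ i * real (\<eta> (i, x)) * (1 + of_int \<sigma> * real (\<eta> (i, x+1)))"
| "move_rate \<sigma> N \<epsilon> \<gamma> rL rR (HopL i x) \<eta> =
     \<epsilon> ^ i * real (\<eta> (i, x+1)) * (1 + of_int \<sigma> * real (\<eta> (i, x)))"
| "move_rate \<sigma> N \<epsilon> \<gamma> rL rR (Switch i x) \<eta> =
     \<gamma> * real (\<eta> (i, x)) * (1 + of_int \<sigma> * real (\<eta> (1 - i, x)))"
| "move_rate \<sigma> N \<epsilon> \<gamma> rL rR (OutL i) \<eta> = real (\<eta> (i, 1)) * (1 + of_int \<sigma> * rL i)"
| "move_rate \<sigma> N \<epsilon> \<gamma> rL rR (InL i) \<eta> = rL i * (1 + of_int \<sigma> * real (\<eta> (i, 1)))"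
| "move_rate \<sigma> N \<epsilon> \<gamma> rL rR (OutR i) \<eta> = real (\<eta> (i, N)) * (1 + of_int \<sigma> * rR i)"
| "move_rate \<sigma> N \<epsilon> \<gamma> rL rR (InR i) \<eta> = rR i * (1 + of_int \<sigma> * real (\<eta> (i, N)))"

definition Qrate :: "int \<Rightarrow> nat \<Rightarrow> real \<Rightarrow> real \<Rightarrow> (nat \<Rightarrow> real) \<Rightarrow> (nat \<Rightarrow> real)
                     \<Rightarrow> conf \<Rightarrow> conf \<Rightarrow> real" where
  "Qrate \<sigma> N \<epsilon> \<gamma> rL rR \<eta> \<eta>' =
     (\<Sum>m\<in>moves N. if apply_move N m \<eta> = \<eta>' \<and> \<eta>' \<noteq> \<eta>
                   then move_rate \<sigma> N \<epsilon> \<gamma> rL rR m \<eta> else 0)"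

definition out_rate :: "int \<Rightarrow> nat \<Rightarrow> real \<Rightarrow> real \<Rightarrow> (nat \<Rightarrow> real) \<Rightarrow> (nat \<Rightarrow> real)
                     \<Rightarrow> conf \<Rightarrow> real" where
  "out_rate \<sigma> N \<epsilon> \<gamma> rL rR \<eta> =
     (\<Sum>m\<in>moves N. if apply_move N m \<eta> \<noteq> \<eta> then move_rate \<sigma> N \<epsilon> \<gamma> rL rR m \<eta> else 0)"

definition stationary :: "int \<Rightarrow> nat \<Rightarrow> real \<Rightarrow> real \<Rightarrow> (nat \<Rightarrow> real) \<Rightarrow> (nat \<Rightarrow> real)
                          \<Rightarrow> (conf \<Rightarrow> real) \<Rightarrow> bool" where
  "stationary \<sigma> N \<epsilon> \<gamma> rL rR \<mu> \<longleftrightarrow>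
     (\<forall>\<eta>. \<mu> \<eta> \<ge> 0) \<and> (\<forall>\<eta>. \<eta> \<notin> Conf \<sigma> N \<longrightarrow> \<mu> \<eta> = 0)
     \<and> (\<mu> has_sum 1) (Conf \<sigma> N)
     \<and> (\<forall>\<eta>'\<in>Conf \<sigma> N.
          ((\<lambda>\<eta>. \<mu> \<eta> * Qrate \<sigma> N \<epsilon> \<gamma> rL rR \<eta> \<eta>') has_sum
             (\<mu> \<eta>' * out_rate \<sigma> N \<epsilon> \<gamma> rL rR \<eta>')) (Conf \<sigma> N))"

definition theta :: "int \<Rightarrow> nat \<Rightarrow> (conf \<Rightarrow> real) \<Rightarrow> nat \<Rightarrow> nat \<Rightarrow> real" where
  "theta \<sigma> N \<mu> i x = (\<Sum>\<^sub>\<infinity>\<eta>\<in>Conf \<sigma> N. \<mu> \<eta> * real (\<eta> (i, x)))"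

end

theory Submission
  imports Defs
begin


fun src :: "nat \<Rightarrow> move \<Rightarrow> (nat\<times>nat) option" where
  "src N (HopR i x) = Some (i,x)" | "src N (HopL i x) = Some (i,x+1)" | "src N (Switch i x) = Some (i,x)"
| "src N (OutL i) = Some (i,1)" | "src N (InL i) = None" | "src N (OutR i) = Some (i,N)" | "src N (InR i) = None"
fun tgt :: "nat \<Rightarrow> move \<Rightarrow> (nat\<times>nat) option" where
  "tgt N (HopR i x) = Some (i,x+1)" | "tgt N (HopL i x) = Some (i,x)" | "tgt N (Switch i x) = Some (1-i,x)"
| "tgt N (OutL i) = None" | "tgt N (InL i) = Some (i,1)" | "tgt N (OutR i) = None" | "tgt N (InR i) = Some (i,N)"

definition ind :: "bool \<Rightarrow> real" where "ind b = (if b then 1 else 0)"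

lemma aux_m1: "real n * c * (real (n - Suc 0) - real n) = - (real n * c)"
  by (cases n) auto

lemma rate_delta:
  "move_rate \<sigma> N \<epsilon> \<gamma> rL rR m \<eta> * (real (apply_move N m \<eta> p) - real (\<eta> p)) =
   move_rate \<sigma> N \<epsilon> \<gamma> rL rR m \<eta> * (ind (tgt N m = Some p) - ind (src N m = Some p))"
  by (cases m) (auto simp: addp_def remp_def ind_def of_nat_diff aux_m1)

lemma mem_moves[simp]:
  "HopR i x \<in> moves N \<longleftrightarrow> i \<in> {0,1} \<and> x \<in> {1..N-1}"
  "HopL i x \<in> moves N \<longleftrightarrow> i \<in> {0,1} \<and> x \<in> {1..N-1}"
  "Switch i x \<in> moves N \<longleftrightarrow> i \<in> {0,1} \<and> x \<in> {1..N}"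
  "OutL i \<in> moves N \<longleftrightarrow> i \<in> {0,1}" "InL i \<in> moves N \<longleftrightarrow> i \<in> {0,1}"
  "OutR i \<in> moves N \<longleftrightarrow> i \<in> {0,1}" "InR i \<in> moves N \<longleftrightarrow> i \<in> {0,1}"
  by (auto simp: moves_def)

definition Dom :: "nat \<Rightarrow> (nat\<times>nat) set" where "Dom N = {0,1::nat} \<times> {1..N}"
definition nn :: "nat \<Rightarrow> conf \<Rightarrow> nat" where "nn N \<eta> = (\<Sum>p\<in>Dom N. \<eta> p)"
definition dl :: "nat \<Rightarrow> move \<Rightarrow> real" where
  "dl N m = ind (tgt N m \<noteq> None) - ind (src N m \<noteq> None)"

lemma finite_Dom[simp]: "finite (Dom N)" by (simp add: Dom_def)

lemma sum_ind_opt: "finite A \<Longrightarrow> (\<Sum>p\<in>A. ind (t = Some p)) = ind (\<exists>q\<in>A. t = Some q)"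
  by (cases t) (auto simp: ind_def)

lemma sum_ind_opt2: "finite A \<Longrightarrow> (\<Sum>p\<in>A. c * (ind (t = Some p) - ind (s = Some p))) = c * (ind (\<exists>q\<in>A. t = Some q) - ind (\<exists>q\<in>A. s = Some q))"
proof -
  assume A: "finite A"
  have e: "(\<Sum>p\<in>A. ind (t = Some p)) = ind (\<exists>q\<in>A. t = Some q)" for t
    using A by (cases t) (auto simp: ind_def)
  have "(\<Sum>p\<in>A. c * (ind (t = Some p) - ind (s = Some p))) = c * ((\<Sum>p\<in>A. ind (t = Some p)) - (\<Sum>p\<in>A. ind (s = Some p)))"
    by (simp add: sum_distrib_left right_diff_distrib sum_subtractf)
  then show ?thesis by (simp only: e)
qed

lemma src_tgt_Dom: assumes "m \<in> moves N" "N \<ge> 1"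
  shows "\<forall>q. src N m = Some q \<longrightarrow> q \<in> Dom N" "\<forall>q. tgt N m = Some q \<longrightarrow> q \<in> Dom N"
  using assms by (auto simp: moves_def Dom_def)

lemma nn_change:
  assumes "m \<in> moves N" "N \<ge> 1"
  shows "move_rate \<sigma> N \<epsilon> \<gamma> rL rR m \<eta> * (real (nn N (apply_move N m \<eta>)) - real (nn N \<eta>))
       = move_rate \<sigma> N \<epsilon> \<gamma> rL rR m \<eta> * dl N m"
proof -
  have "move_rate \<sigma> N \<epsilon> \<gamma> rL rR m \<eta> * (real (nn N (apply_move N m \<eta>)) - real (nn N \<eta>))
     = (\<Sum>p\<in>Dom N. move_rate \<sigma> N \<epsilon> \<gamma> rL rR m \<eta> * (real (apply_move N m \<eta> p) - real (\<eta> p)))"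
    by (simp add: nn_def sum_distrib_left right_diff_distrib sum_subtractf)
  also have "\<dots> = (\<Sum>p\<in>Dom N. move_rate \<sigma> N \<epsilon> \<gamma> rL rR m \<eta> * (ind (tgt N m = Some p) - ind (src N m = Some p)))"
    by (simp add: rate_delta)
  also have "\<dots> = move_rate \<sigma> N \<epsilon> \<gamma> rL rR m \<eta> * (ind (\<exists>q\<in>Dom N. tgt N m = Some q) - ind (\<exists>q\<in>Dom N. src N m = Some q))"
    by (rule sum_ind_opt2) simp
  also have "\<dots> = move_rate \<sigma> N \<epsilon> \<gamma> rL rR m \<eta> * dl N m"
    using src_tgt_Dom[OF assms] unfolding dl_def by (cases "tgt N m"; cases "src N m") auto
  finally show ?thesis .
qed

locale bsys =
  fixes \<sigma> :: int and N :: nat and \<gamma> :: real and rL rR :: "nat \<Rightarrow> real"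
    and \<mu> :: "conf \<Rightarrow> real"
  assumes sig: "\<sigma> \<in> {-1, 0, 1}"
    and N2: "N \<ge> 2"
    and gam: "\<gamma> > 0"
    and rnn: "\<forall>i\<in>{0,1}. rL i \<ge> 0 \<and> rR i \<ge> 0"
    and rle: "\<sigma> = -1 \<longrightarrow> (\<forall>i\<in>{0,1}. rL i \<le> 1 \<and> rR i \<le> 1)"
    and stat: "stationary \<sigma> N 0 \<gamma> rL rR \<mu>"
begin

abbreviation "C \<equiv> Conf \<sigma> N"
abbreviation "r m \<eta> \<equiv> move_rate \<sigma> N 0 \<gamma> rL rR m \<eta>"
abbreviation "a m \<eta> \<equiv> apply_move N m \<eta>"

lemma fac_nonneg: "\<eta> \<in> C \<Longrightarrow> 1 + real_of_int \<sigma> * real (\<eta> p) \<ge> 0"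
  using sig by (cases p) (auto simp: Conf_def)

lemma fac_nonneg2: "i \<in> {0,1} \<Longrightarrow> 1 + real_of_int \<sigma> * rL i \<ge> 0" "i \<in> {0,1} \<Longrightarrow> 1 + real_of_int \<sigma> * rR i \<ge> 0"
  using sig rle rnn by auto

lemma r_nonneg: assumes "\<eta> \<in> C" "m \<in> moves N" shows "r m \<eta> \<ge> 0"
proof -
  have g: "\<gamma> \<ge> 0" using gam by simp
  have rn: "\<And>i. i \<in> {0,1} \<Longrightarrow> rL i \<ge> 0 \<and> rR i \<ge> 0" using rnn by blast
  show ?thesis using assms(2) fac_nonneg[OF assms(1)] fac_nonneg2 rn g
    by (cases m) (simp_all add: mult_nonneg_nonneg)
qed

lemma a_in_C: assumes "\<eta> \<in> C" "m \<in> moves N" "r m \<eta> \<noteq> 0" shows "a m \<eta> \<in> C"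
proof -
  have s: "\<sigma> = -1 \<or> \<sigma> = 0 \<or> \<sigma> = 1" using sig by auto
  have C: "\<forall>i x. (i \<ge> 2 \<or> x < 1 \<or> x > N) \<longrightarrow> \<eta> (i, x) = 0" "\<sigma> = -1 \<longrightarrow> (\<forall>p. \<eta> p \<le> 1)"
    using assms(1) by (auto simp: Conf_def)
  have supp: "\<forall>i x. (i \<ge> 2 \<or> x < 1 \<or> x > N) \<longrightarrow> a m \<eta> (i, x) = 0"
    using assms(2) C(1) N2 by (cases m) (auto simp: addp_def remp_def)
  have bnd: "\<sigma> = -1 \<longrightarrow> (\<forall>p. a m \<eta> p \<le> 1)"
  proof (intro impI allI)
    fix p assume s1: "\<sigma> = -1"
    have le1: "\<And>q. \<eta> q \<le> 1" using C(2) s1 by auto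
    have v: "\<And>q. \<eta> q = 0 \<or> \<eta> q = 1" using le1 by (metis le_antisym less_one not_le)
    have fz: "\<And>q. (1 + real_of_int \<sigma> * real (\<eta> q) \<noteq> 0) = (\<eta> q = 0)"
      using v s1 by fastforce
    have rz: "\<And>q. (real (\<eta> q) \<noteq> 0) = (\<eta> q = 1)" using v by (metis of_nat_0 of_nat_1 zero_neq_one)
    obtain j y :: nat where p: "p = (j,y)" by (cases p)
    show "a m \<eta> p \<le> 1"
    proof (cases m)
      case (HopR i x)
      then have h: "real (\<eta> (i,x)) \<noteq> 0" "1 + real_of_int \<sigma> * real (\<eta> (i,x+1)) \<noteq> 0" using assms(3) by auto
      then have "\<eta> (i,x) = 1" "\<eta> (i,x+1) = 0" using fz rz by blast+
      then show ?thesis using HopR le1 by (auto simp: addp_def remp_def p)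
    next
      case (HopL i x)
      then have h: "real (\<eta> (i,x+1)) \<noteq> 0" "1 + real_of_int \<sigma> * real (\<eta> (i,x)) \<noteq> 0" using assms(3) by auto
      then have "\<eta> (i,x+1) = 1" "\<eta> (i,x) = 0" using fz rz by blast+
      then show ?thesis using HopL le1 by (auto simp: addp_def remp_def p)
    next
      case (Switch i x)
      then have h: "real (\<eta> (i,x)) \<noteq> 0" "1 + real_of_int \<sigma> * real (\<eta> (1-i,x)) \<noteq> 0" using assms(3) by auto
      then have "\<eta> (i,x) = 1" "\<eta> (1-i,x) = 0" using fz rz by blast+
      then show ?thesis using Switch le1 by (auto simp: addp_def remp_def p)
    next
      case (OutL i) then show ?thesis using le1 by (auto simp: addp_def remp_def p)
    next
      case (OutR i) then show ?thesis using le1 by (auto simp: addp_def remp_def p)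
    next
      case (InL i)
      then have h: "1 + real_of_int \<sigma> * real (\<eta> (i,1)) \<noteq> 0" using assms(3) by auto
      then have "\<eta> (i,1) = 0" using fz by blast
      then show ?thesis using InL le1 by (auto simp: addp_def remp_def p)
    next
      case (InR i)
      then have h: "1 + real_of_int \<sigma> * real (\<eta> (i,N)) \<noteq> 0" using assms(3) by auto
      then have "\<eta> (i,N) = 0" using fz by blast
      then show ?thesis using InR le1 by (auto simp: addp_def remp_def p)
    qed
  qed
  show ?thesis unfolding Conf_def mem_Collect_eq using supp bnd by blast
qed

end


context bsys begin

definition S :: "nat \<Rightarrow> conf set" where "S K = {\<eta>\<in>C. nn N \<eta> \<le> K}"
abbreviation "Q \<eta> \<eta>' \<equiv> Qrate \<sigma> N 0 \<gamma> rL rR \<eta> \<eta>'"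
abbreviation "out \<eta> \<equiv> out_rate \<sigma> N 0 \<gamma> rL rR \<eta>"
definition Lop :: "(conf \<Rightarrow> real) \<Rightarrow> conf \<Rightarrow> real" where
  "Lop f \<eta> = (\<Sum>m\<in>moves N. r m \<eta> * (f (a m \<eta>) - f \<eta>))"
definition E1 :: "(conf \<Rightarrow> real) \<Rightarrow> nat \<Rightarrow> real" where
  "E1 f K = (\<Sum>\<eta>\<in>S K. \<mu> \<eta> * (\<Sum>m\<in>moves N. if a m \<eta> \<notin> S K then r m \<eta> * f (a m \<eta>) else 0))"
definition E2 :: "(conf \<Rightarrow> real) \<Rightarrow> nat \<Rightarrow> real" where
  "E2 f K = (\<Sum>\<eta>\<in>S (Suc K) - S K. \<mu> \<eta> * (\<Sum>m\<in>moves N. if a m \<eta> \<in> S K then r m \<eta> * f (a m \<eta>) else 0))"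

lemma finite_moves[simp]: "finite (moves N)" by (simp add: moves_def)

lemma le_nn: "p \<in> Dom N \<Longrightarrow> \<eta> p \<le> nn N \<eta>"
  unfolding nn_def by (rule member_le_sum) auto

lemma conf_zero: assumes "\<eta> \<in> Conf \<sigma>' N" "i \<ge> 2 \<or> x < 1 \<or> x > N" shows "\<eta> (i,x) = 0"
proof -
  have "\<forall>i x. (i \<ge> 2 \<or> x < 1 \<or> x > N) \<longrightarrow> \<eta> (i,x) = 0"
    using assms(1) unfolding Conf_def mem_Collect_eq by (rule conjunct1)
  from this[rule_format, OF assms(2)] show ?thesis .
qed

lemma finite_S[simp]: "finite (S K)"
proof -
  have "S K \<subseteq> {\<eta>. \<forall>p. (p \<in> Dom N \<longrightarrow> \<eta> p \<in> {0..K}) \<and> (p \<notin> Dom N \<longrightarrow> \<eta> p = 0)}"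
  proof (intro subsetI CollectI allI conjI impI)
    fix \<eta> p assume e: "\<eta> \<in> S K"
    { assume "p \<in> Dom N" then show "\<eta> p \<in> {0..K}" using le_nn[of p \<eta>] e by (auto simp: S_def) }
    { assume pd: "p \<notin> Dom N"
      obtain i x where p: "p = (i,x)" by (cases p)
      have d: "i \<ge> 2 \<or> x < 1 \<or> x > N" using pd by (auto simp: Dom_def p)
      have "\<eta> \<in> C" using e by (simp add: S_def)
      from conf_zero[OF this d] show "\<eta> p = 0" unfolding p . }
  qed
  then show ?thesis by (rule finite_subset) (rule finite_set_of_finite_funs, auto)
qed

lemma S_mono: "K \<le> K' \<Longrightarrow> S K \<subseteq> S K'" by (auto simp: S_def)
lemma S_sub_C: "S K \<subseteq> C" by (auto simp: S_def)

lemma dl_cases: "dl N m = -1 \<or> dl N m = 0 \<or> dl N m = 1" by (simp add: dl_def ind_def)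

lemma nn_step: "\<eta> \<in> C \<Longrightarrow> m \<in> moves N \<Longrightarrow> r m \<eta> \<noteq> 0 \<Longrightarrow> real (nn N (a m \<eta>)) = real (nn N \<eta>) + dl N m"
  using nn_change[of m N \<sigma> 0 \<gamma> rL rR \<eta>] N2 by simp

lemma Q_support: assumes "\<eta> \<in> C" "Q \<eta> \<eta>' \<noteq> 0" shows "nn N \<eta> \<le> nn N \<eta>' + 1"
proof -
  from assms(2) obtain m where m: "m \<in> moves N" "(if a m \<eta> = \<eta>' \<and> \<eta>' \<noteq> \<eta> then r m \<eta> else 0) \<noteq> 0"
    using sum.not_neutral_contains_not_neutral[OF assms(2)[unfolded Qrate_def]] by blast
  then have a: "a m \<eta> = \<eta>'" and r: "r m \<eta> \<noteq> 0" by (simp_all split: if_splits)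
  have e: "real (nn N \<eta>') = real (nn N \<eta>) + dl N m" using nn_step[OF assms(1) m(1) r] a by simp
  have "real (nn N \<eta>) \<le> real (nn N \<eta>' + 1)" using e dl_cases[of m] by auto
  then show ?thesis by (simp only: of_nat_le_iff)
qed

lemma bal_fin: assumes "\<eta>' \<in> C" "nn N \<eta>' \<le> K"
  shows "\<mu> \<eta>' * out \<eta>' = (\<Sum>\<eta>\<in>S (Suc K). \<mu> \<eta> * Q \<eta> \<eta>')"
proof -
  have h1: "((\<lambda>\<eta>. \<mu> \<eta> * Q \<eta> \<eta>') has_sum (\<mu> \<eta>' * out \<eta>')) C"
  proof -
    have "\<forall>\<eta>'\<in>C. ((\<lambda>\<eta>. \<mu> \<eta> * Q \<eta> \<eta>') has_sum (\<mu> \<eta>' * out \<eta>')) C"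
      using stat unfolding stationary_def by (elim conjE)
    from bspec[OF this assms(1)] show ?thesis .
  qed
  have h2: "((\<lambda>\<eta>. \<mu> \<eta> * Q \<eta> \<eta>') has_sum (\<Sum>\<eta>\<in>S (Suc K). \<mu> \<eta> * Q \<eta> \<eta>')) C"
  proof (rule has_sum_finite_neutralI)
    show "S (Suc K) \<subseteq> C" by (rule S_sub_C)
    fix \<eta> assume e: "\<eta> \<in> C - S (Suc K)"
    show "\<mu> \<eta> * Q \<eta> \<eta>' = 0"
    proof (rule ccontr)
      assume "\<mu> \<eta> * Q \<eta> \<eta>' \<noteq> 0"
      then have "Q \<eta> \<eta>' \<noteq> 0" by auto
      moreover from e have "\<eta> \<in> C" "\<not> nn N \<eta> \<le> Suc K" by (auto simp: S_def)
      ultimately have "nn N \<eta> \<le> nn N \<eta>' + 1" using Q_support by blast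
      then show False using assms(2) \<open>\<not> nn N \<eta> \<le> Suc K\<close> by linarith
    qed
  qed (rule finite_S, rule refl)
  show ?thesis using has_sum_unique[OF h1 h2] .
qed

end


context bsys begin

definition G :: "(conf \<Rightarrow> real) \<Rightarrow> nat \<Rightarrow> conf \<Rightarrow> real" where
  "G f K \<eta> = (\<Sum>m\<in>moves N. if a m \<eta> \<in> S K \<and> a m \<eta> \<noteq> \<eta> then r m \<eta> * f (a m \<eta>) else 0)"
definition H :: "(conf \<Rightarrow> real) \<Rightarrow> nat \<Rightarrow> conf \<Rightarrow> real" where
  "H f K \<eta> = (\<Sum>m\<in>moves N. if a m \<eta> \<notin> S K then r m \<eta> * f (a m \<eta>) else 0)"

lemma inner: "(\<Sum>\<eta>'\<in>S K. f \<eta>' * Q \<eta> \<eta>') = G f K \<eta>"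
proof -
  have "(\<Sum>\<eta>'\<in>S K. f \<eta>' * Q \<eta> \<eta>') =
        (\<Sum>\<eta>'\<in>S K. \<Sum>m\<in>moves N. f \<eta>' * (if a m \<eta> = \<eta>' \<and> \<eta>' \<noteq> \<eta> then r m \<eta> else 0))"
    unfolding Qrate_def by (simp add: sum_distrib_left)
  also have "\<dots> = (\<Sum>m\<in>moves N. \<Sum>\<eta>'\<in>S K. f \<eta>' * (if a m \<eta> = \<eta>' \<and> \<eta>' \<noteq> \<eta> then r m \<eta> else 0))"
    by (rule sum.swap)
  also have "\<dots> = (\<Sum>m\<in>moves N. \<Sum>\<eta>'\<in>S K. if \<eta>' = a m \<eta> then (if a m \<eta> \<noteq> \<eta> then r m \<eta> * f (a m \<eta>) else 0) else 0)"
    by (intro sum.cong refl) auto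
  also have "\<dots> = G f K \<eta>"
    unfolding G_def by (intro sum.cong refl) (simp add: sum.delta)
  finally show ?thesis .
qed

lemma stepA: "(\<Sum>\<eta>'\<in>S K. f \<eta>' * (\<mu> \<eta>' * out \<eta>')) = (\<Sum>\<eta>\<in>S (Suc K). \<mu> \<eta> * G f K \<eta>)"
proof -
  have "(\<Sum>\<eta>'\<in>S K. f \<eta>' * (\<mu> \<eta>' * out \<eta>')) = (\<Sum>\<eta>'\<in>S K. f \<eta>' * (\<Sum>\<eta>\<in>S (Suc K). \<mu> \<eta> * Q \<eta> \<eta>'))"
  proof (intro sum.cong refl)
    fix \<eta>' assume "\<eta>' \<in> S K"
    then have "\<eta>' \<in> C" "nn N \<eta>' \<le> K" by (simp_all add: S_def)
    from bal_fin[OF this] show "f \<eta>' * (\<mu> \<eta>' * out \<eta>') = f \<eta>' * (\<Sum>\<eta>\<in>S (Suc K). \<mu> \<eta> * Q \<eta> \<eta>')" by simp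
  qed
  also have "\<dots> = (\<Sum>\<eta>'\<in>S K. \<Sum>\<eta>\<in>S (Suc K). \<mu> \<eta> * (f \<eta>' * Q \<eta> \<eta>'))"
    by (simp add: sum_distrib_left mult.left_commute)
  also have "\<dots> = (\<Sum>\<eta>\<in>S (Suc K). \<Sum>\<eta>'\<in>S K. \<mu> \<eta> * (f \<eta>' * Q \<eta> \<eta>'))"
    by (rule sum.swap)
  also have "\<dots> = (\<Sum>\<eta>\<in>S (Suc K). \<mu> \<eta> * G f K \<eta>)"
    by (simp add: inner flip: sum_distrib_left)
  finally show ?thesis .
qed

lemma stepB: assumes "\<eta> \<in> S K"
  shows "Lop f \<eta> = G f K \<eta> + H f K \<eta> - f \<eta> * out \<eta>"
proof -
  have "Lop f \<eta> = (\<Sum>m\<in>moves N. (if a m \<eta> \<in> S K \<and> a m \<eta> \<noteq> \<eta> then r m \<eta> * f (a m \<eta>) else 0)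
          + (if a m \<eta> \<notin> S K then r m \<eta> * f (a m \<eta>) else 0) - f \<eta> * (if a m \<eta> \<noteq> \<eta> then r m \<eta> else 0))"
    unfolding Lop_def
  proof (intro sum.cong refl)
    fix m
    show "r m \<eta> * (f (a m \<eta>) - f \<eta>) = (if a m \<eta> \<in> S K \<and> a m \<eta> \<noteq> \<eta> then r m \<eta> * f (a m \<eta>) else 0)
          + (if a m \<eta> \<notin> S K then r m \<eta> * f (a m \<eta>) else 0) - f \<eta> * (if a m \<eta> \<noteq> \<eta> then r m \<eta> else 0)"
    proof (cases "a m \<eta> = \<eta>")
      case True then show ?thesis using assms by simp
    next
      case False then show ?thesis by (simp add: algebra_simps)
    qed
  qed
  also have "\<dots> = G f K \<eta> + H f K \<eta> - f \<eta> * out \<eta>"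
    unfolding G_def H_def out_rate_def by (simp add: sum.distrib sum_subtractf sum_distrib_left)
  finally show ?thesis .
qed

lemma main_id: "(\<Sum>\<eta>\<in>S K. \<mu> \<eta> * Lop f \<eta>) = E1 f K - E2 f K"
proof -
  have sub: "S K \<subseteq> S (Suc K)" by (rule S_mono) simp
  have "(\<Sum>\<eta>\<in>S K. \<mu> \<eta> * Lop f \<eta>) = (\<Sum>\<eta>\<in>S K. \<mu> \<eta> * G f K \<eta>) + (\<Sum>\<eta>\<in>S K. \<mu> \<eta> * H f K \<eta>)
       - (\<Sum>\<eta>'\<in>S K. f \<eta>' * (\<mu> \<eta>' * out \<eta>'))"
    by (simp add: stepB algebra_simps sum.distrib sum_subtractf cong: sum.cong)
  also have "(\<Sum>\<eta>\<in>S K. \<mu> \<eta> * H f K \<eta>) = E1 f K"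
    unfolding E1_def H_def ..
  also have "(\<Sum>\<eta>'\<in>S K. f \<eta>' * (\<mu> \<eta>' * out \<eta>')) = (\<Sum>\<eta>\<in>S (Suc K). \<mu> \<eta> * G f K \<eta>)"
    by (rule stepA)
  also have "\<dots> = (\<Sum>\<eta>\<in>S (Suc K) - S K. \<mu> \<eta> * G f K \<eta>) + (\<Sum>\<eta>\<in>S K. \<mu> \<eta> * G f K \<eta>)"
    by (rule sum.subset_diff[OF sub finite_S])
  also have "(\<Sum>\<eta>\<in>S (Suc K) - S K. \<mu> \<eta> * G f K \<eta>) = E2 f K"
    unfolding E2_def G_def
  proof (intro sum.cong refl arg_cong2[where f="(*)"] refl)
    fix \<eta> m assume "\<eta> \<in> S (Suc K) - S K"
    then show "(if a m \<eta> \<in> S K \<and> a m \<eta> \<noteq> \<eta> then r m \<eta> * f (a m \<eta>) else 0) =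
               (if a m \<eta> \<in> S K then r m \<eta> * f (a m \<eta>) else 0)" by auto
  qed
  finally show ?thesis by simp
qed

end


context bsys begin

definition F :: "nat \<Rightarrow> real" where "F K = E1 (\<lambda>_. 1) K"
definition nnr :: "conf \<Rightarrow> real" where "nnr \<eta> = real (nn N \<eta>)"
definition Inj :: "conf \<Rightarrow> real" where "Inj \<eta> = (\<Sum>m\<in>moves N. if dl N m = 1 then r m \<eta> else 0)"
definition Out :: "conf \<Rightarrow> real" where "Out \<eta> = (\<Sum>m\<in>moves N. if dl N m = -1 then r m \<eta> else 0)"
definition Y :: "nat \<Rightarrow> real" where "Y K = (\<Sum>\<eta>\<in>S K. \<mu> \<eta> * Inj \<eta>)"

lemma mu_nonneg: "\<mu> \<eta> \<ge> 0" using stat unfolding stationary_def by (elim conjE) simp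

lemma Lop_one: "Lop (\<lambda>_. 1) \<eta> = 0" unfolding Lop_def by simp

lemma E_one: "E1 (\<lambda>_. 1) K = E2 (\<lambda>_. 1) K"
  using main_id[where K=K and f="\<lambda>_. 1"] by (simp add: Lop_one)

lemma step_facts: assumes "\<eta> \<in> C" "m \<in> moves N" "r m \<eta> \<noteq> 0"
  shows "a m \<eta> \<in> C" "r m \<eta> > 0" "real (nn N (a m \<eta>)) \<le> real (nn N \<eta>) + 1"
        "real (nn N (a m \<eta>)) \<ge> real (nn N \<eta>) - 1"
proof -
  show "a m \<eta> \<in> C" by (rule a_in_C[OF assms])
  show "r m \<eta> > 0" using r_nonneg[OF assms(1,2)] assms(3) by linarith
  have e: "real (nn N (a m \<eta>)) = real (nn N \<eta>) + dl N m" by (rule nn_step[OF assms])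
  show "real (nn N (a m \<eta>)) \<le> real (nn N \<eta>) + 1" "real (nn N (a m \<eta>)) \<ge> real (nn N \<eta>) - 1"
    using e dl_cases[of m] by auto
qed

lemma le_nnr: "p \<in> Dom N \<Longrightarrow> real (\<eta> p) \<le> real (nn N \<eta>)"
  using le_nn by simp

lemma E1_bound: assumes p: "p \<in> Dom N"
  shows "0 \<le> E1 (\<lambda>\<eta>. real (\<eta> p)) K" "E1 (\<lambda>\<eta>. real (\<eta> p)) K \<le> (real K + 1) * F K"
proof -
  have tw: "0 \<le> (if a m \<eta> \<notin> S K then r m \<eta> * real (a m \<eta> p) else 0) \<and>
            (if a m \<eta> \<notin> S K then r m \<eta> * real (a m \<eta> p) else 0) \<le> (real K + 1) * (if a m \<eta> \<notin> S K then r m \<eta> * 1 else 0)"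
    if e: "\<eta> \<in> S K" and m: "m \<in> moves N" for \<eta> m
  proof (cases "a m \<eta> \<notin> S K \<and> r m \<eta> \<noteq> 0")
    case True
    have eC: "\<eta> \<in> C" "nn N \<eta> \<le> K" using e by (simp_all add: S_def)
    note sf = step_facts[OF eC(1) m conjunct2[OF True]]
    have "real (a m \<eta> p) \<le> real K + 1" using le_nnr[OF p, of "a m \<eta>"] sf(3) eC(2) by linarith
    then show ?thesis using True sf(2) by (simp add: mult_left_mono mult.commute)
  next
    case False
    then show ?thesis by auto
  qed
  show "0 \<le> E1 (\<lambda>\<eta>. real (\<eta> p)) K" unfolding E1_def
    using tw mu_nonneg by (intro sum_nonneg mult_nonneg_nonneg) auto
  have "E1 (\<lambda>\<eta>. real (\<eta> p)) K \<le> (\<Sum>\<eta>\<in>S K. \<mu> \<eta> * ((real K + 1) * (\<Sum>m\<in>moves N. if a m \<eta> \<notin> S K then r m \<eta> * 1 else 0)))"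
    unfolding E1_def sum_distrib_left[of "real K + 1"]
    using tw mu_nonneg by (intro sum_mono mult_left_mono) auto
  also have "\<dots> = (real K + 1) * F K"
    unfolding F_def E1_def by (simp add: sum_distrib_left mult.left_commute)
  finally show "E1 (\<lambda>\<eta>. real (\<eta> p)) K \<le> (real K + 1) * F K" .
qed

lemma E2_bound: assumes p: "p \<in> Dom N"
  shows "0 \<le> E2 (\<lambda>\<eta>. real (\<eta> p)) K" "E2 (\<lambda>\<eta>. real (\<eta> p)) K \<le> real K * F K"
proof -
  have tw: "0 \<le> (if a m \<eta> \<in> S K then r m \<eta> * real (a m \<eta> p) else 0) \<and>
            (if a m \<eta> \<in> S K then r m \<eta> * real (a m \<eta> p) else 0) \<le> real K * (if a m \<eta> \<in> S K then r m \<eta> * 1 else 0)"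
    if e: "\<eta> \<in> S (Suc K) - S K" and m: "m \<in> moves N" for \<eta> m
  proof (cases "a m \<eta> \<in> S K \<and> r m \<eta> \<noteq> 0")
    case True
    have eC: "\<eta> \<in> C" using e by (simp add: S_def)
    note sf = step_facts[OF eC(1) m conjunct2[OF True]]
    have "nn N (a m \<eta>) \<le> K" using True by (simp add: S_def)
    then have "real (a m \<eta> p) \<le> real K" using le_nnr[OF p, of "a m \<eta>"] by linarith
    then show ?thesis using True sf(2) by (simp add: mult_left_mono mult.commute)
  next
    case False
    then show ?thesis by auto
  qed
  show "0 \<le> E2 (\<lambda>\<eta>. real (\<eta> p)) K" unfolding E2_def
    using tw mu_nonneg by (intro sum_nonneg mult_nonneg_nonneg) auto
  have "E2 (\<lambda>\<eta>. real (\<eta> p)) K \<le> (\<Sum>\<eta>\<in>S (Suc K) - S K. \<mu> \<eta> * (real K * (\<Sum>m\<in>moves N. if a m \<eta> \<in> S K then r m \<eta> * 1 else 0)))"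
    unfolding E2_def sum_distrib_left[of "real K"]
    using tw mu_nonneg by (intro sum_mono mult_left_mono) auto
  also have "\<dots> = real K * E2 (\<lambda>_. 1) K"
    unfolding E2_def by (simp add: sum_distrib_left mult.left_commute)
  also have "\<dots> = real K * F K" by (simp add: F_def E_one)
  finally show "E2 (\<lambda>\<eta>. real (\<eta> p)) K \<le> real K * F K" .
qed

lemma F_nonneg: "F K \<ge> 0"
proof -
  have "0 \<le> E1 (\<lambda>\<eta>. real (\<eta> (0,1))) K" by (rule E1_bound(1)) (use N2 in \<open>auto simp: Dom_def\<close>)
  moreover have "E1 (\<lambda>\<eta>. real (\<eta> (0,1))) K \<le> (real K + 1) * F K" by (rule E1_bound(2)) (use N2 in \<open>auto simp: Dom_def\<close>)
  ultimately have "0 \<le> (real K + 1) * F K" by linarith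
  then show ?thesis by (simp add: zero_le_mult_iff)
qed

lemma Lop_bound: assumes "p \<in> Dom N"
  shows "\<bar>\<Sum>\<eta>\<in>S K. \<mu> \<eta> * Lop (\<lambda>\<eta>. real (\<eta> p)) \<eta>\<bar> \<le> (real K + 1) * F K"
  using main_id[where K=K and f="\<lambda>\<eta>. real (\<eta> p)"] E1_bound[OF assms, of K] E2_bound[OF assms, of K] F_nonneg[of K]
  by (simp add: abs_le_iff) (smt (verit) mult_right_mono of_nat_0_le_iff)

end


context bsys begin

lemma Lop_nnr: assumes "\<eta> \<in> C" shows "Lop nnr \<eta> = Inj \<eta> - Out \<eta>"
proof -
  have "Lop nnr \<eta> = (\<Sum>m\<in>moves N. (if dl N m = 1 then r m \<eta> else 0) - (if dl N m = -1 then r m \<eta> else 0))"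
    unfolding Lop_def nnr_def
  proof (intro sum.cong refl)
    fix m assume m: "m \<in> moves N"
    have "r m \<eta> * (real (nn N (a m \<eta>)) - real (nn N \<eta>)) = r m \<eta> * dl N m"
      using nn_change[OF m, of \<sigma> 0 \<gamma> rL rR \<eta>] N2 by simp
    also have "\<dots> = (if dl N m = 1 then r m \<eta> else 0) - (if dl N m = -1 then r m \<eta> else 0)"
      using dl_cases[of m] by auto
    finally show "r m \<eta> * (real (nn N (a m \<eta>)) - real (nn N \<eta>)) = (if dl N m = 1 then r m \<eta> else 0) - (if dl N m = -1 then r m \<eta> else 0)" .
  qed
  then show ?thesis unfolding Inj_def Out_def by (simp add: sum_subtractf)
qed

lemma F_le_nnr: "F K \<le> (\<Sum>\<eta>\<in>S K. \<mu> \<eta> * Lop nnr \<eta>)"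
proof -
  have tw1: "(real K + 1) * (if a m \<eta> \<notin> S K then r m \<eta> * 1 else 0) \<le> (if a m \<eta> \<notin> S K then r m \<eta> * nnr (a m \<eta>) else 0)"
    if e: "\<eta> \<in> S K" and m: "m \<in> moves N" for \<eta> m
  proof (cases "a m \<eta> \<notin> S K \<and> r m \<eta> \<noteq> 0")
    case True
    have eC: "\<eta> \<in> C" using e by (simp add: S_def)
    note sf = step_facts[OF eC(1) m conjunct2[OF True]]
    have "\<not> nn N (a m \<eta>) \<le> K" using True sf(1) by (simp add: S_def)
    then have "real K + 1 \<le> nnr (a m \<eta>)" unfolding nnr_def by linarith
    then show ?thesis using True sf(2) by (simp add: mult_left_mono mult.commute)
  next
    case False
    then show ?thesis by auto
  qed
  have tw2: "(if a m \<eta> \<in> S K then r m \<eta> * nnr (a m \<eta>) else 0) \<le> real K * (if a m \<eta> \<in> S K then r m \<eta> * 1 else 0)"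
    if e: "\<eta> \<in> S (Suc K) - S K" and m: "m \<in> moves N" for \<eta> m
  proof (cases "a m \<eta> \<in> S K \<and> r m \<eta> \<noteq> 0")
    case True
    have eC: "\<eta> \<in> C" using e by (simp add: S_def)
    note sf = step_facts[OF eC(1) m conjunct2[OF True]]
    have "nn N (a m \<eta>) \<le> K" using True by (simp add: S_def)
    then have "nnr (a m \<eta>) \<le> real K" unfolding nnr_def by linarith
    then show ?thesis using True sf(2) by (simp add: mult_left_mono mult.commute)
  next
    case False
    then show ?thesis by auto
  qed
  have A: "(real K + 1) * F K \<le> E1 nnr K"
  proof -
    have "(real K + 1) * F K = (\<Sum>\<eta>\<in>S K. \<mu> \<eta> * ((real K + 1) * (\<Sum>m\<in>moves N. if a m \<eta> \<notin> S K then r m \<eta> * 1 else 0)))"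
      unfolding F_def E1_def by (simp add: sum_distrib_left mult.left_commute)
    also have "\<dots> \<le> E1 nnr K"
      unfolding E1_def sum_distrib_left[of "real K + 1"]
      using tw1 mu_nonneg by (intro sum_mono mult_left_mono) auto
    finally show ?thesis .
  qed
  have B: "E2 nnr K \<le> real K * F K"
  proof -
    have "E2 nnr K \<le> (\<Sum>\<eta>\<in>S (Suc K) - S K. \<mu> \<eta> * (real K * (\<Sum>m\<in>moves N. if a m \<eta> \<in> S K then r m \<eta> * 1 else 0)))"
      unfolding E2_def sum_distrib_left[of "real K"]
      using tw2 mu_nonneg by (intro sum_mono mult_left_mono) auto
    also have "\<dots> = real K * E2 (\<lambda>_. 1) K"
      unfolding E2_def by (simp add: sum_distrib_left mult.left_commute)
    also have "\<dots> = real K * F K" by (simp add: F_def E_one)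
    finally show ?thesis .
  qed
  show ?thesis using main_id[where K=K and f=nnr] A B by (simp add: algebra_simps)
qed

lemma Out_le_Y: "(\<Sum>\<eta>\<in>S K. \<mu> \<eta> * Out \<eta>) \<le> Y K"
proof -
  have "(\<Sum>\<eta>\<in>S K. \<mu> \<eta> * Lop nnr \<eta>) = (\<Sum>\<eta>\<in>S K. \<mu> \<eta> * Inj \<eta>) - (\<Sum>\<eta>\<in>S K. \<mu> \<eta> * Out \<eta>)"
  proof -
    have "(\<Sum>\<eta>\<in>S K. \<mu> \<eta> * Lop nnr \<eta>) = (\<Sum>\<eta>\<in>S K. \<mu> \<eta> * Inj \<eta> - \<mu> \<eta> * Out \<eta>)"
    proof (intro sum.cong refl)
      fix \<eta> assume "\<eta> \<in> S K"
      then have "\<eta> \<in> C" by (simp add: S_def)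
      then show "\<mu> \<eta> * Lop nnr \<eta> = \<mu> \<eta> * Inj \<eta> - \<mu> \<eta> * Out \<eta>" by (simp add: Lop_nnr right_diff_distrib)
    qed
    then show ?thesis by (simp only: sum_subtractf)
  qed
  then show ?thesis using F_le_nnr[of K] F_nonneg[of K] unfolding Y_def by linarith
qed

lemma H_one: assumes e: "\<eta> \<in> S K"
  shows "(\<Sum>m\<in>moves N. if a m \<eta> \<notin> S K then r m \<eta> * 1 else 0) = (if nn N \<eta> = K then Inj \<eta> else 0)"
proof -
  have eC: "\<eta> \<in> C" "nn N \<eta> \<le> K" using e by (simp_all add: S_def)
  have "(\<Sum>m\<in>moves N. if a m \<eta> \<notin> S K then r m \<eta> * 1 else 0) =
        (\<Sum>m\<in>moves N. if nn N \<eta> = K then (if dl N m = 1 then r m \<eta> else 0) else 0)"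
  proof (intro sum.cong refl)
    fix m assume m: "m \<in> moves N"
    show "(if a m \<eta> \<notin> S K then r m \<eta> * 1 else 0) = (if nn N \<eta> = K then (if dl N m = 1 then r m \<eta> else 0) else 0)"
    proof (cases "r m \<eta> = 0")
      case True then show ?thesis by simp
    next
      case False
      note sf = step_facts[OF eC(1) m False]
      have e2: "real (nn N (a m \<eta>)) = real (nn N \<eta>) + dl N m" by (rule nn_step[OF eC(1) m False])
      have "(a m \<eta> \<notin> S K) = (\<not> nn N (a m \<eta>) \<le> K)" using sf(1) by (simp add: S_def)
      also have "\<dots> = (real K < real (nn N \<eta>) + dl N m)"
        unfolding e2[symmetric] not_le of_nat_less_iff ..
      also have "\<dots> = (nn N \<eta> = K \<and> dl N m = 1)"
      proof -
        consider "dl N m = -1" | "dl N m = 0" | "dl N m = 1" using dl_cases[of m] by blast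
        then show ?thesis
        proof cases
          case 1 then show ?thesis using eC(2) by simp
        next
          case 2 then show ?thesis using eC(2) by simp
        next
          case 3
          have "(real K < real (nn N \<eta>) + 1) = (K < nn N \<eta> + 1)"
            by (metis of_nat_1 of_nat_add of_nat_less_iff)
          moreover have "(K < nn N \<eta> + 1) = (nn N \<eta> = K)" using eC(2) by linarith
          ultimately show ?thesis using 3 by simp
        qed
      qed
      finally show ?thesis by auto
    qed
  qed
  also have "\<dots> = (if nn N \<eta> = K then Inj \<eta> else 0)" unfolding Inj_def by simp
  finally show ?thesis .
qed

lemma F_eq: "F K = (\<Sum>\<eta>\<in>S K. \<mu> \<eta> * (if nn N \<eta> = K then Inj \<eta> else 0))"
  unfolding F_def E1_def using H_one by (intro sum.cong refl) simp

lemma Y_0: "Y 0 = F 0"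
  unfolding Y_def F_eq by (intro sum.cong refl) (simp add: S_def)

lemma Y_Suc: "Y (Suc K) = Y K + F (Suc K)"
proof -
  have sub: "S K \<subseteq> S (Suc K)" by (rule S_mono) simp
  have "Y (Suc K) = (\<Sum>\<eta>\<in>S (Suc K) - S K. \<mu> \<eta> * Inj \<eta>) + Y K"
    unfolding Y_def by (rule sum.subset_diff[OF sub finite_S])
  moreover have "F (Suc K) = (\<Sum>\<eta>\<in>S (Suc K) - S K. \<mu> \<eta> * Inj \<eta>)"
  proof -
    have "F (Suc K) = (\<Sum>\<eta>\<in>S (Suc K) - S K. \<mu> \<eta> * (if nn N \<eta> = Suc K then Inj \<eta> else 0))
                    + (\<Sum>\<eta>\<in>S K. \<mu> \<eta> * (if nn N \<eta> = Suc K then Inj \<eta> else 0))"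
      unfolding F_eq by (rule sum.subset_diff[OF sub finite_S])
    also have "(\<Sum>\<eta>\<in>S K. \<mu> \<eta> * (if nn N \<eta> = Suc K then Inj \<eta> else 0)) = 0"
      by (intro sum.neutral) (auto simp: S_def)
    also have "(\<Sum>\<eta>\<in>S (Suc K) - S K. \<mu> \<eta> * (if nn N \<eta> = Suc K then Inj \<eta> else 0)) = (\<Sum>\<eta>\<in>S (Suc K) - S K. \<mu> \<eta> * Inj \<eta>)"
      by (intro sum.cong refl) (auto simp: S_def)
    finally show ?thesis by simp
  qed
  ultimately show ?thesis by simp
qed

lemma Y_sum: "Y M = (\<Sum>K\<le>M. F K)"
  by (induction M) (simp_all add: Y_0 Y_Suc)

lemma P_le1: "(\<Sum>\<eta>\<in>S K. \<mu> \<eta>) \<le> 1"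
proof -
  have h: "(\<mu> has_sum 1) C" using stat unfolding stationary_def by (elim conjE)
  show ?thesis by (rule finite_sum_le_has_sum[OF h finite_S S_sub_C]) (rule mu_nonneg)
qed

end


lemma sum_moves:
  fixes h :: "move \<Rightarrow> 'b::comm_monoid_add"
  shows "sum h (moves N) = (\<Sum>i\<in>{0,1::nat}. (\<Sum>x\<in>{1..N-1}. h (HopR i x) + h (HopL i x))
      + (\<Sum>x\<in>{1..N}. h (Switch i x)) + h (OutL i) + h (InL i) + h (OutR i) + h (InR i))"
proof -
  define B where "B i = (\<Union>x\<in>{1..N-1}. {HopR i x, HopL i x}) \<union> (\<Union>x\<in>{1..N}. {Switch i x})
                        \<union> {OutL i, InL i, OutR i, InR i}" for i
  have m: "moves N = (\<Union>i\<in>{0,1}. B i)" unfolding moves_def B_def by simp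
  have fB: "finite (B i)" for i unfolding B_def by auto
  have dis: "i \<noteq> j \<Longrightarrow> B i \<inter> B j = {}" for i j unfolding B_def by auto
  have "sum h (moves N) = (\<Sum>i\<in>{0,1::nat}. sum h (B i))"
    unfolding m by (rule sum.UNION_disjoint) (auto simp: fB dis)
  moreover have "sum h (B i) = (\<Sum>x\<in>{1..N-1}. h (HopR i x) + h (HopL i x))
      + (\<Sum>x\<in>{1..N}. h (Switch i x)) + h (OutL i) + h (InL i) + h (OutR i) + h (InR i)" for i
  proof -
    have h1: "sum h (\<Union>x\<in>{1..N-1}. {HopR i x, HopL i x}) = (\<Sum>x\<in>{1..N-1}. h (HopR i x) + h (HopL i x))"
      by (subst sum.UNION_disjoint) auto
    have h2: "sum h (\<Union>x\<in>{1..N}. {Switch i x}) = (\<Sum>x\<in>{1..N}. h (Switch i x))"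
      by (subst sum.UNION_disjoint) auto
    have h3: "sum h {OutL i, InL i, OutR i, InR i} = h (OutL i) + h (InL i) + h (OutR i) + h (InR i)"
      by (simp add: add.assoc)
    show ?thesis unfolding B_def
      apply (subst sum.union_disjoint, auto)[1]
      apply (subst sum.union_disjoint, auto)[1]
      using h1 h2 h3 by (simp add: add.assoc)
  qed
  ultimately show ?thesis by simp
qed


lemma term_le:
  fixes \<rho> R q e :: real and s :: int
  assumes "0 \<le> \<rho>" "0 \<le> e" "0 \<le> q" "\<rho> \<le> q * (1 + \<rho>)"
    and "(s = -1 \<and> e \<le> 1 \<and> \<rho> \<le> 1) \<or> s = 0 \<or> s = 1"
  shows "\<rho> * (1 + real_of_int s * e) \<le> \<rho> + q * (e * (1 + real_of_int s * \<rho>))"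
proof -
  consider "s = -1" "e \<le> 1" "\<rho> \<le> 1" | "s = 0" | "s = 1" using assms(5) by blast
  then show ?thesis
  proof cases
    case 1
    have "0 \<le> \<rho> * e" using assms by simp
    moreover have "0 \<le> q * (e * (1 - \<rho>))" using assms 1 by simp
    ultimately show ?thesis using 1 by (simp add: algebra_simps)
  next
    case 2 then show ?thesis using assms by simp
  next
    case 3
    have "\<rho> * e \<le> q * (1 + \<rho>) * e" using assms(4) assms(2) by (rule mult_right_mono)
    then show ?thesis using 3 by (simp add: algebra_simps)
  qed
qed

lemma rho_q: fixes \<rho> R :: real assumes "0 \<le> \<rho>" "\<rho> \<le> R" shows "\<rho> \<le> R / (1 + R) * (1 + \<rho>)"
proof -
  have "\<rho> * (1 + R) \<le> R * (1 + \<rho>)" using assms by (simp add: algebra_simps)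
  then show ?thesis using assms by (simp add: field_simps)
qed

context bsys begin

definition Rt :: real where "Rt = rL 0 + rL 1 + rR 0 + rR 1"
definition qt :: real where "qt = Rt / (1 + Rt)"

lemma Rt_nonneg: "Rt \<ge> 0" using rnn unfolding Rt_def by auto

lemma Inj_expand: "Inj \<eta> = r (InL 0) \<eta> + r (InR 0) \<eta> + (r (InL 1) \<eta> + r (InR 1) \<eta>)"
  unfolding Inj_def sum_moves by (simp add: dl_def ind_def)

lemma Out_expand: "Out \<eta> = r (OutL 0) \<eta> + r (OutR 0) \<eta> + (r (OutL 1) \<eta> + r (OutR 1) \<eta>)"
  unfolding Out_def sum_moves by (simp add: dl_def ind_def)

lemma Inj_le: assumes e: "\<eta> \<in> C" shows "Inj \<eta> \<le> Rt + qt * Out \<eta>"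
proof -
  have q0: "0 \<le> qt" unfolding qt_def using Rt_nonneg by simp
  have sc: "(\<sigma> = -1 \<and> real (\<eta> p) \<le> 1 \<and> \<rho> \<le> 1) \<or> \<sigma> = 0 \<or> \<sigma> = 1"
    if "\<sigma> = -1 \<longrightarrow> \<rho> \<le> 1" for p \<rho>
  proof -
    have "\<sigma> = -1 \<longrightarrow> \<eta> p \<le> 1" using e by (cases p) (simp add: Conf_def)
    then show ?thesis using sig that by auto
  qed
  have T: "\<rho> * (1 + real_of_int \<sigma> * real (\<eta> p)) \<le> \<rho> + qt * (real (\<eta> p) * (1 + real_of_int \<sigma> * \<rho>))"
    if "0 \<le> \<rho>" "\<rho> \<le> Rt" "\<sigma> = -1 \<longrightarrow> \<rho> \<le> 1" for p \<rho>
    by (rule term_le[OF that(1) _ q0 _ sc[OF that(3)]]) (simp, unfold qt_def, rule rho_q[OF that(1,2)])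
  have b: "0 \<le> rL 0" "0 \<le> rL 1" "0 \<le> rR 0" "0 \<le> rR 1" using rnn by auto
  have c: "\<sigma> = -1 \<longrightarrow> rL 0 \<le> 1" "\<sigma> = -1 \<longrightarrow> rL 1 \<le> 1" "\<sigma> = -1 \<longrightarrow> rR 0 \<le> 1" "\<sigma> = -1 \<longrightarrow> rR 1 \<le> 1"
    using rle by auto
  have d: "rL 0 \<le> Rt" "rL 1 \<le> Rt" "rR 0 \<le> Rt" "rR 1 \<le> Rt" using b unfolding Rt_def by linarith+
  note t1 = T[OF b(1) d(1) c(1), of "(0,1)"] and t2 = T[OF b(2) d(2) c(2), of "(1,1)"]
   and t3 = T[OF b(3) d(3) c(3), of "(0,N)"] and t4 = T[OF b(4) d(4) c(4), of "(1,N)"]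
  show ?thesis unfolding Inj_expand Out_expand
    using t1 t2 t3 t4 by (simp add: Rt_def algebra_simps)
qed

lemma Y_bound: "Y K \<le> Rt * (1 + Rt)"
proof -
  have "Y K \<le> (\<Sum>\<eta>\<in>S K. \<mu> \<eta> * (Rt + qt * Out \<eta>))"
    unfolding Y_def using Inj_le mu_nonneg by (intro sum_mono mult_left_mono) (auto simp: S_def)
  also have "\<dots> = Rt * (\<Sum>\<eta>\<in>S K. \<mu> \<eta>) + qt * (\<Sum>\<eta>\<in>S K. \<mu> \<eta> * Out \<eta>)"
    by (simp add: algebra_simps sum.distrib sum_distrib_left)
  also have "\<dots> \<le> Rt * 1 + qt * Y K"
    using P_le1[of K] Out_le_Y[of K] Rt_nonneg
    by (intro add_mono mult_left_mono) (auto simp: qt_def)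
  finally have "Y K \<le> Rt + qt * Y K" by simp
  then have "Y K * (1 - qt) \<le> Rt" by (simp add: algebra_simps)
  moreover have "1 - qt = 1 / (1 + Rt)" unfolding qt_def using Rt_nonneg by (simp add: field_simps)
  ultimately show ?thesis using Rt_nonneg by (simp add: field_simps)
qed

lemma good_K: assumes "\<epsilon> > 0" shows "\<exists>K\<ge>j. (real K + 1) * F K < \<epsilon>"
proof (rule ccontr)
  assume "\<not> ?thesis"
  then have H: "\<And>K. K \<ge> j \<Longrightarrow> \<epsilon> \<le> (real K + 1) * F K" by (simp add: not_less)
  have sF: "summable F"
    by (rule bounded_imp_summable[where B="Rt * (1 + Rt)"]) (use F_nonneg Y_bound Y_sum in auto)
  have "summable (\<lambda>K. \<epsilon> * inverse (real (Suc K)))"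
  proof (rule summable_comparison_test_ev[OF _ sF])
    show "\<forall>\<^sub>F K in sequentially. norm (\<epsilon> * inverse (real (Suc K))) \<le> F K"
      unfolding eventually_at_top_linorder
    proof (intro exI[of _ j] allI impI)
      fix K assume "K \<ge> j"
      from H[OF this] have "\<epsilon> / (real K + 1) \<le> F K" by (simp add: field_simps)
      then show "norm (\<epsilon> * inverse (real (Suc K))) \<le> F K" using assms by (simp add: field_simps)
    qed
  qed
  then have "summable (\<lambda>K. inverse (real (Suc K)))" using assms by simp
  then have "summable (\<lambda>K. inverse (real K) :: real)" by (subst summable_Suc_iff[symmetric]) simp
  then show False using not_summable_harmonic by blast
qed

end


lemma ind_simps[simp]: "ind True = 1" "ind False = 0" by (simp_all add: ind_def)

lemma d1: "(\<Sum>x = Suc 0..N - Suc 0. g x * ind (Suc x = y)) = (if 2 \<le> y \<and> y \<le> N then g (y - 1) else (0::real))"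
proof -
  have "(\<Sum>x = Suc 0..N - Suc 0. g x * ind (Suc x = y)) = (\<Sum>x = Suc 0..N - Suc 0. if x = y - 1 \<and> 2 \<le> y then g x else 0)"
    by (intro sum.cong refl) (auto simp: ind_def)
  also have "\<dots> = (if 2 \<le> y \<and> y \<le> N then g (y - 1) else 0)"
    by (cases "2 \<le> y") (auto simp: sum.delta')
  finally show ?thesis .
qed

lemma d2: "(\<Sum>x = Suc 0..N - Suc 0. g x * ind (x = y)) = (if 1 \<le> y \<and> y + 1 \<le> N then g y else (0::real))"
proof -
  have "(\<Sum>x = Suc 0..N - Suc 0. g x * ind (x = y)) = (\<Sum>x = Suc 0..N - Suc 0. if x = y then g x else 0)"
    by (intro sum.cong refl) (auto simp: ind_def)
  also have "\<dots> = (if 1 \<le> y \<and> y + 1 \<le> N then g y else 0)"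
    by (auto simp: sum.delta')
  finally show ?thesis .
qed

lemma d3: "(\<Sum>x = Suc 0..N. g x * ind (x = y)) = (if 1 \<le> y \<and> y \<le> N then g y else (0::real))"
proof -
  have "(\<Sum>x = Suc 0..N. g x * ind (x = y)) = (\<Sum>x = Suc 0..N. if x = y then g x else 0)"
    by (intro sum.cong refl) (auto simp: ind_def)
  also have "\<dots> = (if 1 \<le> y \<and> y \<le> N then g y else 0)"
    by (auto simp: sum.delta')
  finally show ?thesis .
qed

lemma d1b: "(\<Sum>x = Suc 0..N - Suc 0. ind (Suc x = y) * g x) = (if 2 \<le> y \<and> y \<le> N then g (y - 1) else (0::real))"
  using d1[where N=N and g=g and y=y] by (simp add: mult.commute)
lemma d2b: "(\<Sum>x = Suc 0..N - Suc 0. ind (x = y) * g x) = (if 1 \<le> y \<and> y + 1 \<le> N then g y else (0::real))"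
  using d2[where N=N and g=g and y=y] by (simp add: mult.commute)

context bsys begin

lemma Lop_fp: "Lop (\<lambda>\<eta>. real (\<eta> p)) \<eta> = (\<Sum>m\<in>moves N. r m \<eta> * (ind (tgt N m = Some p) - ind (src N m = Some p)))"
  unfolding Lop_def by (simp add: rate_delta)

lemma Lop0: assumes "1 \<le> y" "y \<le> N"
  shows "Lop (\<lambda>\<eta>. real (\<eta> (0,y))) \<eta> =
    (if 2 \<le> y then real (\<eta> (0,y-1)) - real (\<eta> (0,y)) else 0)
  + (if y + 1 \<le> N then real (\<eta> (0,y+1)) - real (\<eta> (0,y)) else 0)
  + \<gamma> * (real (\<eta> (1,y)) - real (\<eta> (0,y)))
  + (if y = 1 then rL 0 - real (\<eta> (0,1)) else 0)
  + (if y = N then rR 0 - real (\<eta> (0,N)) else 0)"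
  unfolding Lop_fp sum_moves using assms N2
  by (simp add: right_diff_distrib sum_subtractf d1 d2 d3) (auto simp: algebra_simps sum.distrib sum_subtractf d1 d2 d1b d2b)

lemma Lop1: assumes "1 \<le> y" "y \<le> N"
  shows "Lop (\<lambda>\<eta>. real (\<eta> (1,y))) \<eta> =
    \<gamma> * (real (\<eta> (0,y)) - real (\<eta> (1,y)))
  + (if y = 1 then rL 1 - real (\<eta> (1,1)) else 0)
  + (if y = N then rR 1 - real (\<eta> (1,N)) else 0)"
  unfolding Lop_fp sum_moves using assms N2
  by (simp add: right_diff_distrib sum_subtractf d1 d2 d3) (auto simp: algebra_simps)

end


context bsys begin

definition T :: "nat \<Rightarrow> nat \<times> nat \<Rightarrow> real" where "T K p = (\<Sum>\<eta>\<in>S K. \<mu> \<eta> * real (\<eta> p))"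
definition PP :: "nat \<Rightarrow> real" where "PP K = (\<Sum>\<eta>\<in>S K. \<mu> \<eta>)"

lemma Lam0_int: assumes "2 \<le> x" "x + 1 \<le> N"
  shows "(\<Sum>\<eta>\<in>S K. \<mu> \<eta> * Lop (\<lambda>\<eta>. real (\<eta> (0,x))) \<eta>) =
     T K (0,x-1) + T K (0,x+1) - 2 * T K (0,x) + \<gamma> * (T K (1,x) - T K (0,x))"
proof -
  have "(\<Sum>\<eta>\<in>S K. \<mu> \<eta> * Lop (\<lambda>\<eta>. real (\<eta> (0,x))) \<eta>) =
        (\<Sum>\<eta>\<in>S K. \<mu> \<eta> * real (\<eta> (0,x-1)) + \<mu> \<eta> * real (\<eta> (0,x+1)) - 2 * (\<mu> \<eta> * real (\<eta> (0,x)))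
           + \<gamma> * (\<mu> \<eta> * real (\<eta> (1,x)) - \<mu> \<eta> * real (\<eta> (0,x))))"
    using assms by (intro sum.cong refl) (simp add: Lop0 algebra_simps)
  then show ?thesis unfolding T_def by (simp add: sum.distrib sum_subtractf sum_distrib_left right_diff_distrib sum_negf)
qed

lemma Lam0_1:
  shows "(\<Sum>\<eta>\<in>S K. \<mu> \<eta> * Lop (\<lambda>\<eta>. real (\<eta> (0,1))) \<eta>) =
     T K (0,2) - T K (0,1) + \<gamma> * (T K (1,1) - T K (0,1)) + rL 0 * PP K - T K (0,1)"
proof -
  have "(\<Sum>\<eta>\<in>S K. \<mu> \<eta> * Lop (\<lambda>\<eta>. real (\<eta> (0,1))) \<eta>) =
        (\<Sum>\<eta>\<in>S K. \<mu> \<eta> * real (\<eta> (0,2)) - \<mu> \<eta> * real (\<eta> (0,1))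
           + \<gamma> * (\<mu> \<eta> * real (\<eta> (1,1)) - \<mu> \<eta> * real (\<eta> (0,1))) + rL 0 * \<mu> \<eta> - \<mu> \<eta> * real (\<eta> (0,1)))"
    using N2 by (intro sum.cong refl) (simp add: Lop0 algebra_simps numeral_2_eq_2)
  then show ?thesis unfolding T_def PP_def by (simp add: sum.distrib sum_subtractf sum_distrib_left right_diff_distrib sum_negf)
qed

lemma Lam0_N:
  shows "(\<Sum>\<eta>\<in>S K. \<mu> \<eta> * Lop (\<lambda>\<eta>. real (\<eta> (0,N))) \<eta>) =
     T K (0,N-1) - T K (0,N) + \<gamma> * (T K (1,N) - T K (0,N)) + rR 0 * PP K - T K (0,N)"
proof -
  have "(\<Sum>\<eta>\<in>S K. \<mu> \<eta> * Lop (\<lambda>\<eta>. real (\<eta> (0,N))) \<eta>) =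
        (\<Sum>\<eta>\<in>S K. \<mu> \<eta> * real (\<eta> (0,N-1)) - \<mu> \<eta> * real (\<eta> (0,N))
           + \<gamma> * (\<mu> \<eta> * real (\<eta> (1,N)) - \<mu> \<eta> * real (\<eta> (0,N))) + rR 0 * \<mu> \<eta> - \<mu> \<eta> * real (\<eta> (0,N)))"
    using N2 by (intro sum.cong refl) (simp add: Lop0 algebra_simps)
  then show ?thesis unfolding T_def PP_def by (simp add: sum.distrib sum_subtractf sum_distrib_left right_diff_distrib sum_negf)
qed

lemma Lam1_int: assumes "2 \<le> x" "x + 1 \<le> N"
  shows "(\<Sum>\<eta>\<in>S K. \<mu> \<eta> * Lop (\<lambda>\<eta>. real (\<eta> (1,x))) \<eta>) = \<gamma> * (T K (0,x) - T K (1,x))"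
proof -
  have h1: "1 \<le> x" "x \<le> N" using assms by auto
  have "(\<Sum>\<eta>\<in>S K. \<mu> \<eta> * Lop (\<lambda>\<eta>. real (\<eta> (1,x))) \<eta>) =
        (\<Sum>\<eta>\<in>S K. \<gamma> * (\<mu> \<eta> * real (\<eta> (0,x)) - \<mu> \<eta> * real (\<eta> (1,x))))"
    unfolding Lop1[OF h1] using assms by (intro sum.cong refl) (simp add: algebra_simps)
  then show ?thesis unfolding T_def by (simp add: sum.distrib sum_subtractf sum_distrib_left right_diff_distrib sum_negf)
qed

lemma one_le_N: "1 \<le> N" using N2 by simp

lemma Lam1_1:
  shows "(\<Sum>\<eta>\<in>S K. \<mu> \<eta> * Lop (\<lambda>\<eta>. real (\<eta> (1,1))) \<eta>) =
     \<gamma> * (T K (0,1) - T K (1,1)) + rL 1 * PP K - T K (1,1)"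
proof -
  have "(\<Sum>\<eta>\<in>S K. \<mu> \<eta> * Lop (\<lambda>\<eta>. real (\<eta> (1,1))) \<eta>) =
        (\<Sum>\<eta>\<in>S K. \<gamma> * (\<mu> \<eta> * real (\<eta> (0,1)) - \<mu> \<eta> * real (\<eta> (1,1))) + rL 1 * \<mu> \<eta> - \<mu> \<eta> * real (\<eta> (1,1)))"
    unfolding Lop1[OF order_refl one_le_N] using N2 by (intro sum.cong refl) (simp add: algebra_simps)
  then show ?thesis unfolding T_def PP_def by (simp add: sum.distrib sum_subtractf sum_distrib_left right_diff_distrib sum_negf)
qed

lemma Lam1_N:
  shows "(\<Sum>\<eta>\<in>S K. \<mu> \<eta> * Lop (\<lambda>\<eta>. real (\<eta> (1,N))) \<eta>) =
     \<gamma> * (T K (0,N) - T K (1,N)) + rR 1 * PP K - T K (1,N)"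
proof -
  have "(\<Sum>\<eta>\<in>S K. \<mu> \<eta> * Lop (\<lambda>\<eta>. real (\<eta> (1,N))) \<eta>) =
        (\<Sum>\<eta>\<in>S K. \<gamma> * (\<mu> \<eta> * real (\<eta> (0,N)) - \<mu> \<eta> * real (\<eta> (1,N))) + rR 1 * \<mu> \<eta> - \<mu> \<eta> * real (\<eta> (1,N)))"
    unfolding Lop1[OF one_le_N order_refl] using N2 by (intro sum.cong refl) (simp add: algebra_simps)
  then show ?thesis unfolding T_def PP_def by (simp add: sum.distrib sum_subtractf sum_distrib_left right_diff_distrib sum_negf)
qed

end


context bsys begin

definition ks :: "nat \<Rightarrow> nat" where
  "ks j = (SOME K. K \<ge> j \<and> (real K + 1) * F K < 1 / (real j + 1))"

lemma ks: "ks j \<ge> j" "(real (ks j) + 1) * F (ks j) < 1 / (real j + 1)"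
proof -
  have "\<exists>K. K \<ge> j \<and> (real K + 1) * F K < 1 / (real j + 1)"
    using good_K[of "1 / (real j + 1)" j] by auto
  from someI_ex[OF this] show "ks j \<ge> j" "(real (ks j) + 1) * F (ks j) < 1 / (real j + 1)"
    unfolding ks_def by auto
qed

lemma err0: "(\<lambda>j. (real (ks j) + 1) * F (ks j)) \<longlonglongrightarrow> 0"
proof (rule Lim_null_comparison)
  show "\<forall>\<^sub>F j in sequentially. norm ((real (ks j) + 1) * F (ks j)) \<le> inverse (real (Suc j))"
  proof (intro always_eventually allI)
    fix j
    have "0 \<le> (real (ks j) + 1) * F (ks j)" using F_nonneg by simp
    then show "norm ((real (ks j) + 1) * F (ks j)) \<le> inverse (real (Suc j))"
      using ks(2)[of j] by (simp add: field_simps)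
  qed
  show "(\<lambda>j. inverse (real (Suc j))) \<longlonglongrightarrow> 0" by (rule LIMSEQ_inverse_real_of_nat)
qed

lemma null_Lam: assumes "p \<in> Dom N" "\<And>K. (\<Sum>\<eta>\<in>S K. \<mu> \<eta> * Lop (\<lambda>\<eta>. real (\<eta> p)) \<eta>) = g K"
  shows "(\<lambda>j. g (ks j)) \<longlonglongrightarrow> 0"
proof (rule Lim_null_comparison[OF _ err0])
  show "\<forall>\<^sub>F j in sequentially. norm (g (ks j)) \<le> (real (ks j) + 1) * F (ks j)"
    using Lop_bound[OF assms(1)] assms(2) by (intro always_eventually allI) simp
qed

lemma PP_lim: "(\<lambda>j. PP (ks j)) \<longlonglongrightarrow> 1"
proof (rule LIMSEQ_I)
  fix \<epsilon> :: real assume e: "\<epsilon> > 0"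
  have h: "(\<mu> has_sum 1) C" using stat unfolding stationary_def by (elim conjE)
  obtain Fs where Fs: "finite Fs" "Fs \<subseteq> C" "dist (sum \<mu> Fs) 1 \<le> \<epsilon> / 2"
    using has_sum_finite_approximation[OF h, of "\<epsilon>/2"] e by auto
  define M where "M = Max (insert 0 (nn N ` Fs))"
  have FsS: "Fs \<subseteq> S M"
  proof
    fix \<eta> assume "\<eta> \<in> Fs"
    then have "nn N \<eta> \<le> M" unfolding M_def using Fs(1) by (intro Max_ge) auto
    then show "\<eta> \<in> S M" using \<open>\<eta> \<in> Fs\<close> Fs(2) by (auto simp: S_def)
  qed
  show "\<exists>no. \<forall>n\<ge>no. norm (PP (ks n) - 1) < \<epsilon>"
  proof (intro exI allI impI)
    fix n assume "n \<ge> M"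
    then have "S M \<subseteq> S (ks n)" using ks(1)[of n] by (intro S_mono) simp
    then have "sum \<mu> Fs \<le> PP (ks n)" unfolding PP_def using FsS mu_nonneg
      by (intro sum_mono2) auto
    moreover have "PP (ks n) \<le> 1" unfolding PP_def by (rule P_le1)
    moreover have "sum \<mu> Fs \<ge> 1 - \<epsilon>/2" using Fs(3) unfolding dist_real_def by linarith
    ultimately show "norm (PP (ks n) - 1) < \<epsilon>" using e by simp
  qed
qed

end


context bsys begin

abbreviation "u j x \<equiv> T (ks j) (0,x)"
abbreviation "w j x \<equiv> T (ks j) (1,x)"
abbreviation "pj j \<equiv> PP (ks j)"

lemma Dom_mem: "i \<in> {0,1} \<Longrightarrow> 1 \<le> x \<Longrightarrow> x \<le> N \<Longrightarrow> (i,x) \<in> Dom N" by (auto simp: Dom_def)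

lemma n1i: assumes "2 \<le> x" "x + 1 \<le> N" shows "(\<lambda>j. \<gamma> * (u j x - w j x)) \<longlonglongrightarrow> 0"
  by (rule null_Lam[OF Dom_mem Lam1_int[OF assms]]) (use assms in auto)
lemma n0i: assumes "2 \<le> x" "x + 1 \<le> N"
  shows "(\<lambda>j. u j (x-1) + u j (x+1) - 2 * u j x + \<gamma> * (w j x - u j x)) \<longlonglongrightarrow> 0"
  by (rule null_Lam[OF Dom_mem Lam0_int[OF assms]]) (use assms in auto)
lemma n11: "(\<lambda>j. \<gamma> * (u j 1 - w j 1) + rL 1 * pj j - w j 1) \<longlonglongrightarrow> 0"
  by (rule null_Lam[OF Dom_mem Lam1_1]) (use N2 in auto)
lemma n1N: "(\<lambda>j. \<gamma> * (u j N - w j N) + rR 1 * pj j - w j N) \<longlonglongrightarrow> 0"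
  by (rule null_Lam[OF Dom_mem Lam1_N]) (use N2 in auto)
lemma n01: "(\<lambda>j. u j 2 - u j 1 + \<gamma> * (w j 1 - u j 1) + rL 0 * pj j - u j 1) \<longlonglongrightarrow> 0"
  by (rule null_Lam[OF Dom_mem Lam0_1]) (use N2 in auto)
lemma n0N: "(\<lambda>j. u j (N-1) - u j N + \<gamma> * (w j N - u j N) + rR 0 * pj j - u j N) \<longlonglongrightarrow> 0"
  by (rule null_Lam[OF Dom_mem Lam0_N]) (use N2 in auto)

lemma w_int: assumes "2 \<le> x" "x + 1 \<le> N" shows "(\<lambda>j. w j x - u j x) \<longlonglongrightarrow> 0"
proof -
  have "(\<lambda>j. (-1/\<gamma>) * (\<gamma> * (u j x - w j x))) \<longlonglongrightarrow> (-1/\<gamma>) * 0"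
    by (intro tendsto_mult tendsto_const n1i[OF assms])
  moreover have "(\<lambda>j. (-1/\<gamma>) * (\<gamma> * (u j x - w j x))) = (\<lambda>j. w j x - u j x)"
    using gam by (auto simp: field_simps)
  ultimately show ?thesis by simp
qed

lemma sd: assumes "2 \<le> x" "x + 1 \<le> N" shows "(\<lambda>j. u j (x-1) + u j (x+1) - 2 * u j x) \<longlonglongrightarrow> 0"
proof -
  have "(\<lambda>j. (u j (x-1) + u j (x+1) - 2 * u j x + \<gamma> * (w j x - u j x)) + \<gamma> * (u j x - w j x)) \<longlonglongrightarrow> 0 + 0"
    by (intro tendsto_add n0i[OF assms] n1i[OF assms])
  then show ?thesis by (simp add: algebra_simps)
qed

lemma lin: "1 \<le> x \<Longrightarrow> x \<le> N \<Longrightarrow> (\<lambda>j. u j x - u j 1 - (real x - 1) * (u j 2 - u j 1)) \<longlonglongrightarrow> 0"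
proof (induction x rule: less_induct)
  case (less x)
  show ?case
  proof (cases "x \<le> 2")
    case True
    then have "x = 1 \<or> x = 2" using less.prems by auto
    then show ?thesis by auto
  next
    case False
    then obtain z where z: "x = z + 3" by (metis add.commute le_Suc_ex not_le numeral_3_eq_3 Suc_leI numeral_2_eq_2)
    have ih1: "(\<lambda>j. u j (z+2) - u j 1 - (real (z+2) - 1) * (u j 2 - u j 1)) \<longlonglongrightarrow> 0"
      by (rule less.IH) (use z less.prems in auto)
    have ih2: "(\<lambda>j. u j (z+1) - u j 1 - (real (z+1) - 1) * (u j 2 - u j 1)) \<longlonglongrightarrow> 0"
      by (rule less.IH) (use z less.prems in auto)
    have s: "(\<lambda>j. u j (z+2-1) + u j (z+2+1) - 2 * u j (z+2)) \<longlonglongrightarrow> 0"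
      by (rule sd) (use z less.prems in auto)
    have "(\<lambda>j. 2 * (u j (z+2) - u j 1 - (real (z+2) - 1) * (u j 2 - u j 1))
             - (u j (z+1) - u j 1 - (real (z+1) - 1) * (u j 2 - u j 1))
             + (u j (z+2-1) + u j (z+2+1) - 2 * u j (z+2))) \<longlonglongrightarrow> 2 * 0 - 0 + 0"
      by (intro tendsto_add tendsto_diff tendsto_mult tendsto_const ih1 ih2 s)
    moreover have "(\<lambda>j. 2 * (u j (z+2) - u j 1 - (real (z+2) - 1) * (u j 2 - u j 1))
             - (u j (z+1) - u j 1 - (real (z+1) - 1) * (u j 2 - u j 1))
             + (u j (z+2-1) + u j (z+2+1) - 2 * u j (z+2))) =
          (\<lambda>j. u j x - u j 1 - (real x - 1) * (u j 2 - u j 1))"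
      by (rule ext) (simp add: z algebra_simps numeral_3_eq_3 numeral_2_eq_2)
    ultimately show ?thesis by simp
  qed
qed

end


lemma idY: fixes g a1 a2 b c wN r0 r1 p N :: real assumes "g \<ge> 0"
  shows "(b - c + g * (wN - c) + r0 * p - c) + g/(1+g) * (g * (c - wN) + r1 * p - wN)
            - (b - a1 - (N - 2) * (a2 - a1))
            + (1 + (1 + 2*g)/(1+g)) * (c - a1 - (N - 1) * (a2 - a1)) - (r0 + g * r1 / (1 + g)) * p
       = - ((1 + 2*g)/(1+g)) * a1 - (1 + (1 + 2*g)/(1+g) * (N - 1)) * (a2 - a1)"
proof -
  have h: "1 + g \<noteq> 0" using assms by simp
  define t where "t = 1/(1+g)"
  have ht: "t * (1+g) = 1" using h unfolding t_def by simp
  have e: "g/(1+g) = 1 - t" "(1+2*g)/(1+g) = 2 - t" "g*r1/(1+g) = r1 - r1*t" using h unfolding t_def by (simp_all add: field_simps)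
  show ?thesis unfolding e using ht by algebra
qed
lemma id1: fixes g a1 a2 w1 r0 r1 p :: real assumes "g \<ge> 0"
  shows "(a2 - a1 + g*(w1 - a1) + r0*p - a1) + g/(1+g)*(g*(a1 - w1) + r1*p - w1) - (r0 + g*r1/(1+g))*p = (a2 - a1) - (1+2*g)/(1+g)*a1"
proof -
  have h: "1 + g \<noteq> 0" using assms by simp
  define t where "t = 1/(1+g)"
  have ht: "t * (1+g) = 1" using h unfolding t_def by simp
  have e: "g/(1+g) = 1 - t" "(1+2*g)/(1+g) = 2 - t" "g*r1/(1+g) = r1 - r1*t" using h unfolding t_def by (simp_all add: field_simps)
  show ?thesis unfolding e using ht by algebra
qed
lemma id2: fixes A B D k N :: real assumes "D = k*(2 + k*(N - 1))" "D \<noteq> 0"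
  shows "(- (1 + k * (N - 1)) * (B - k * A) - (- k * A - (1 + k * (N - 1)) * B)) / D = A"
  using assms by (simp add: field_simps) algebra
lemma id3: fixes A B D k N :: real assumes "D = k*(2 + k*(N - 1))" "D \<noteq> 0"
  shows "k * ((B - k * A) - (- k * A - (1 + k * (N - 1)) * B)) / D = B"
  using assms by (simp add: field_simps) algebra
lemma id4: fixes g a w r p :: real assumes "g \<ge> 0"
  shows "(g * a + r * p - (g * (a - w) + r * p - w)) / (1 + g) = w"
  using assms by (simp add: field_simps)

context bsys begin

definition "kk = (1 + 2*\<gamma>) / (1 + \<gamma>)"
definition "c1 = rL 0 + \<gamma> * rL 1 / (1 + \<gamma>)"
definition "c2 = rR 0 + \<gamma> * rR 1 / (1 + \<gamma>)"
definition "Dl = kk * (2 + kk * (real N - 1))"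
definition "Ast = ((1 + kk * (real N - 1)) * c1 + c2) / Dl"
definition "Bst = kk * (c2 - c1) / Dl"

lemma g1: "1 + \<gamma> \<noteq> 0" "1 + \<gamma> > 0" using gam by auto
lemma kk_pos: "kk > 0" unfolding kk_def using gam by simp
lemma Dl_pos: "Dl > 0" unfolding Dl_def using kk_pos N2 by (simp add: add_pos_nonneg)

lemma Xlim: "(\<lambda>j. (u j 2 - u j 1) - kk * u j 1) \<longlonglongrightarrow> - c1"
proof -
  have "(\<lambda>j. (u j 2 - u j 1 + \<gamma> * (w j 1 - u j 1) + rL 0 * pj j - u j 1)
            + \<gamma>/(1+\<gamma>) * (\<gamma> * (u j 1 - w j 1) + rL 1 * pj j - w j 1) - c1 * pj j)
        \<longlonglongrightarrow> 0 + \<gamma>/(1+\<gamma>) * 0 - c1 * 1"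
    by (intro tendsto_add tendsto_diff tendsto_mult tendsto_const n01 n11 PP_lim)
  moreover have "(\<lambda>j. (u j 2 - u j 1 + \<gamma> * (w j 1 - u j 1) + rL 0 * pj j - u j 1)
            + \<gamma>/(1+\<gamma>) * (\<gamma> * (u j 1 - w j 1) + rL 1 * pj j - w j 1) - c1 * pj j)
        = (\<lambda>j. (u j 2 - u j 1) - kk * u j 1)"
    unfolding kk_def c1_def using gam by (intro ext id1) simp
  ultimately show ?thesis by simp
qed

lemma Ylim: "(\<lambda>j. - kk * u j 1 - (1 + kk * (real N - 1)) * (u j 2 - u j 1)) \<longlonglongrightarrow> - c2"
proof -
  have NN: "real (N - 1) = real N - 1" using N2 by (simp add: of_nat_diff)
  have E1: "(\<lambda>j. u j (N-1) - u j 1 - (real N - 2) * (u j 2 - u j 1)) \<longlonglongrightarrow> 0"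
    using lin[of "N-1"] N2 by (simp add: NN)
  have E2: "(\<lambda>j. u j N - u j 1 - (real N - 1) * (u j 2 - u j 1)) \<longlonglongrightarrow> 0"
    using lin[of N] N2 by simp
  have "(\<lambda>j. (u j (N-1) - u j N + \<gamma> * (w j N - u j N) + rR 0 * pj j - u j N)
            + \<gamma>/(1+\<gamma>) * (\<gamma> * (u j N - w j N) + rR 1 * pj j - w j N)
            - (u j (N-1) - u j 1 - (real N - 2) * (u j 2 - u j 1))
            + (1 + kk) * (u j N - u j 1 - (real N - 1) * (u j 2 - u j 1)) - c2 * pj j)
        \<longlonglongrightarrow> 0 + \<gamma>/(1+\<gamma>) * 0 - 0 + (1 + kk) * 0 - c2 * 1"
    by (intro tendsto_add tendsto_diff tendsto_mult tendsto_const n0N n1N E1 E2 PP_lim)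
  moreover have "(\<lambda>j. (u j (N-1) - u j N + \<gamma> * (w j N - u j N) + rR 0 * pj j - u j N)
            + \<gamma>/(1+\<gamma>) * (\<gamma> * (u j N - w j N) + rR 1 * pj j - w j N)
            - (u j (N-1) - u j 1 - (real N - 2) * (u j 2 - u j 1))
            + (1 + kk) * (u j N - u j 1 - (real N - 1) * (u j 2 - u j 1)) - c2 * pj j)
        = (\<lambda>j. - kk * u j 1 - (1 + kk * (real N - 1)) * (u j 2 - u j 1))"
    unfolding kk_def c2_def using gam by (intro ext idY) simp
  ultimately show ?thesis by simp
qed

lemma Alim: "(\<lambda>j. u j 1) \<longlonglongrightarrow> Ast"
proof -
  have "(\<lambda>j. (- (1 + kk * (real N - 1)) * ((u j 2 - u j 1) - kk * u j 1)
              - (- kk * u j 1 - (1 + kk * (real N - 1)) * (u j 2 - u j 1))) / Dl)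
        \<longlonglongrightarrow> (- (1 + kk * (real N - 1)) * (- c1) - (- c2)) / Dl"
    by (intro tendsto_divide tendsto_diff tendsto_mult tendsto_const Xlim Ylim) (use Dl_pos in simp)
  moreover have "(\<lambda>j. (- (1 + kk * (real N - 1)) * ((u j 2 - u j 1) - kk * u j 1)
              - (- kk * u j 1 - (1 + kk * (real N - 1)) * (u j 2 - u j 1))) / Dl) = (\<lambda>j. u j 1)"
    using Dl_pos by (intro ext id2[OF Dl_def]) simp
  moreover have "(- (1 + kk * (real N - 1)) * (- c1) - (- c2)) / Dl = Ast" unfolding Ast_def by (simp add: algebra_simps)
  ultimately show ?thesis by metis
qed

lemma Blim: "(\<lambda>j. u j 2 - u j 1) \<longlonglongrightarrow> Bst"
proof -
  have "(\<lambda>j. kk * (((u j 2 - u j 1) - kk * u j 1)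
              - (- kk * u j 1 - (1 + kk * (real N - 1)) * (u j 2 - u j 1))) / Dl)
        \<longlonglongrightarrow> kk * (- c1 - (- c2)) / Dl"
    by (intro tendsto_divide tendsto_diff tendsto_mult tendsto_const Xlim Ylim) (use Dl_pos in simp)
  moreover have "(\<lambda>j. kk * (((u j 2 - u j 1) - kk * u j 1)
              - (- kk * u j 1 - (1 + kk * (real N - 1)) * (u j 2 - u j 1))) / Dl) = (\<lambda>j. u j 2 - u j 1)"
    using Dl_pos by (intro ext id3[OF Dl_def]) simp
  ultimately show ?thesis by (simp add: Bst_def algebra_simps)
qed

lemma ulim: assumes "1 \<le> x" "x \<le> N" shows "(\<lambda>j. u j x) \<longlonglongrightarrow> Ast + (real x - 1) * Bst"
proof -
  have "(\<lambda>j. (u j x - u j 1 - (real x - 1) * (u j 2 - u j 1)) + u j 1 + (real x - 1) * (u j 2 - u j 1))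
        \<longlonglongrightarrow> 0 + Ast + (real x - 1) * Bst"
    by (intro tendsto_add tendsto_mult tendsto_const lin[OF assms] Alim Blim)
  then show ?thesis by simp
qed

lemma wlim_int: assumes "2 \<le> x" "x + 1 \<le> N" shows "(\<lambda>j. w j x) \<longlonglongrightarrow> Ast + (real x - 1) * Bst"
proof -
  have "(\<lambda>j. (w j x - u j x) + u j x) \<longlonglongrightarrow> 0 + (Ast + (real x - 1) * Bst)"
    by (intro tendsto_add w_int[OF assms] ulim) (use assms in auto)
  then show ?thesis by simp
qed

lemma w1lim: "(\<lambda>j. w j 1) \<longlonglongrightarrow> (\<gamma> * Ast + rL 1) / (1 + \<gamma>)"
proof -
  have "(\<lambda>j. (\<gamma> * u j 1 + rL 1 * pj j - (\<gamma> * (u j 1 - w j 1) + rL 1 * pj j - w j 1)) / (1 + \<gamma>))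
        \<longlonglongrightarrow> (\<gamma> * Ast + rL 1 * 1 - 0) / (1 + \<gamma>)"
    by (intro tendsto_divide tendsto_diff tendsto_add tendsto_mult tendsto_const Alim PP_lim n11) (use g1 in simp)
  moreover have "(\<lambda>j. (\<gamma> * u j 1 + rL 1 * pj j - (\<gamma> * (u j 1 - w j 1) + rL 1 * pj j - w j 1)) / (1 + \<gamma>)) = (\<lambda>j. w j 1)"
    using gam by (intro ext id4) simp
  ultimately show ?thesis by simp
qed

lemma wNlim: "(\<lambda>j. w j N) \<longlonglongrightarrow> (\<gamma> * (Ast + (real N - 1) * Bst) + rR 1) / (1 + \<gamma>)"
proof -
  have "(\<lambda>j. (\<gamma> * u j N + rR 1 * pj j - (\<gamma> * (u j N - w j N) + rR 1 * pj j - w j N)) / (1 + \<gamma>))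
        \<longlonglongrightarrow> (\<gamma> * (Ast + (real N - 1) * Bst) + rR 1 * 1 - 0) / (1 + \<gamma>)"
    by (intro tendsto_divide tendsto_diff tendsto_add tendsto_mult tendsto_const ulim PP_lim n1N) (use g1 N2 in simp_all)
  moreover have "(\<lambda>j. (\<gamma> * u j N + rR 1 * pj j - (\<gamma> * (u j N - w j N) + rR 1 * pj j - w j N)) / (1 + \<gamma>)) = (\<lambda>j. w j N)"
    using gam by (intro ext id4) simp
  ultimately show ?thesis by simp
qed

end


lemma formula_eq: fixes g n x a b c d :: real assumes g: "g > 0" and n: "n \<ge> 2"
  shows "(((1 + (1 + 2*g)/(1+g) * (n - 1)) * (a + g * b / (1 + g)) + (c + g * d / (1 + g))) / ((1 + 2*g)/(1+g) * (2 + (1 + 2*g)/(1+g) * (n - 1))))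
       + (x - 1) * ((1 + 2*g)/(1+g) * ((c + g * d / (1 + g)) - (a + g * b / (1 + g))) / ((1 + 2*g)/(1+g) * (2 + (1 + 2*g)/(1+g) * (n - 1))))
     = (1 + g) / (1 + 2 * g) * ((((1 + n) + (1 + 2 * n) * g) / (1 + n + 2*n*g) - (1 + 2 * g) / (1 + n + 2*n*g) * x) * a + (- g / (1 + n + 2*n*g) + (1 + 2 * g) / (1 + n + 2*n*g) * x) * c)
       + g / (1 + 2 * g) * ((((1 + n) + (1 + 2 * n) * g) / (1 + n + 2*n*g) - (1 + 2 * g) / (1 + n + 2*n*g) * x) * b + (- g / (1 + n + 2*n*g) + (1 + 2 * g) / (1 + n + 2*n*g) * x) * d)"
proof -
  have h1: "1 + g > 0" "1 + 2*g > 0" "1 + n + 2*n*g > 0" using g n by (auto intro!: add_pos_nonneg)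
  have k: "(1 + 2*g)/(1+g) * (2 + (1 + 2*g)/(1+g) * (n - 1)) = (1 + 2*g) * (1 + n + 2*n*g) / ((1+g)*(1+g))"
    using h1 by (simp add: field_simps)
  define t where "t = 1/(1+g)"
  define s where "s = 1/(1+2*g)"
  define q where "q = 1/(1 + n + 2*n*g)"
  have ht: "t*(1+g) = 1" "s*(1+2*g) = 1" "q*(1 + n + 2*n*g) = 1" using h1 by (simp_all add: t_def s_def q_def)
  have e1: "\<And>z. z / (1+g) = z * t" "\<And>z. z / (1+2*g) = z * s" "\<And>z. z / (1 + n + 2*n*g) = z * q"
    by (simp_all add: t_def s_def q_def)
  have e2: "\<And>z. z / ((1 + 2*g) * (1 + n + 2*n*g) / ((1+g)*(1+g))) = z * (1+g) * (1+g) * s * q"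
    using h1 by (simp add: s_def q_def field_simps)
  show ?thesis unfolding k unfolding e2 unfolding e1 using ht by algebra
qed

context bsys begin

lemma T_mono: "K \<le> K' \<Longrightarrow> T K p \<le> T K' p"
  unfolding T_def using mu_nonneg by (intro sum_mono2 S_mono) auto

lemma theta_lim: assumes L: "(\<lambda>j. T (ks j) (i,x)) \<longlonglongrightarrow> L" shows "theta \<sigma> N \<mu> i x = L"
proof -
  define g where "g = (\<lambda>\<eta>. \<mu> \<eta> * real (\<eta> (i, x)))"
  have gnn: "\<And>\<eta>. g \<eta> \<ge> 0" unfolding g_def using mu_nonneg by simp
  have TL: "T K (i,x) \<le> L" for K
  proof (rule LIMSEQ_le_const[OF L])
    show "\<exists>N0. \<forall>n\<ge>N0. T K (i, x) \<le> T (ks n) (i, x)"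
      using ks(1) by (intro exI[of _ K] allI impI T_mono) (meson order_trans)
  qed
  have fin: "sum g Fs \<le> L" if Fs: "finite Fs" "Fs \<subseteq> C" for Fs
  proof -
    define M where "M = Max (insert 0 (nn N ` Fs))"
    have FsS: "Fs \<subseteq> S M"
    proof
      fix \<eta> assume "\<eta> \<in> Fs"
      then have "nn N \<eta> \<le> M" unfolding M_def using Fs(1) by (intro Max_ge) auto
      then show "\<eta> \<in> S M" using \<open>\<eta> \<in> Fs\<close> Fs(2) by (auto simp: S_def)
    qed
    have "sum g Fs \<le> sum g (S M)" using FsS gnn by (intro sum_mono2) auto
    also have "\<dots> = T M (i,x)" unfolding T_def g_def ..
    also have "\<dots> \<le> L" by (rule TL)
    finally show ?thesis .
  qed
  have sm: "g summable_on C"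
  proof (rule nonneg_bdd_above_summable_on)
    show "bdd_above (sum g ` {F. F \<subseteq> C \<and> finite F})"
      using fin by (intro bdd_aboveI[of _ L]) auto
  qed (rule gnn)
  have le: "infsum g C \<le> L" by (rule infsum_le_finite_sums[OF sm fin])
  have ge: "L \<le> infsum g C"
  proof (rule LIMSEQ_le_const2[OF L])
    show "\<exists>N0. \<forall>n\<ge>N0. T (ks n) (i, x) \<le> infsum g C"
    proof (intro exI[of _ 0] allI impI)
      fix n :: nat
      have "T (ks n) (i, x) = sum g (S (ks n))" unfolding T_def g_def ..
      also have "\<dots> \<le> infsum g C" using gnn by (intro finite_sum_le_infsum[OF sm finite_S S_sub_C])
      finally show "T (ks n) (i, x) \<le> infsum g C" .
    qed
  qed
  show ?thesis unfolding theta_def g_def[symmetric] using le ge by simp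
qed

end

theorem mainTheorem5:
  fixes \<sigma> :: int and N :: nat and \<gamma> :: real and rL rR :: "nat \<Rightarrow> real"
    and \<mu> :: "conf \<Rightarrow> real"
  assumes sig: "\<sigma> \<in> {-1, 0, 1}"
    and N2: "N \<ge> 2"
    and gam: "\<gamma> > 0"
    and rnn: "\<forall>i\<in>{0,1}. rL i \<ge> 0 \<and> rR i \<ge> 0"
    and rle: "\<sigma> = -1 \<longrightarrow> (\<forall>i\<in>{0,1}. rL i \<le> 1 \<and> rR i \<le> 1)"
    and stat: "stationary \<sigma> N 0 \<gamma> rL rR \<mu>"
  defines "D \<equiv> 1 + real N + 2 * real N * \<gamma>"
  defines "A \<equiv> (\<lambda>x::nat. ((1 + real N) + (1 + 2 * real N) * \<gamma>) / D - (1 + 2 * \<gamma>) / D * real x)"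
  defines "B \<equiv> (\<lambda>x::nat. - \<gamma> / D + (1 + 2 * \<gamma>) / D * real x)"
  shows "(\<forall>x\<in>{1..N}. theta \<sigma> N \<mu> 0 x =
            (1 + \<gamma>) / (1 + 2 * \<gamma>) * (A x * rL 0 + B x * rR 0)
            + \<gamma> / (1 + 2 * \<gamma>) * (A x * rL 1 + B x * rR 1))
       \<and> theta \<sigma> N \<mu> 1 1 = \<gamma> / (1 + \<gamma>) * theta \<sigma> N \<mu> 0 1 + 1 / (1 + \<gamma>) * rL 1
       \<and> (\<forall>x\<in>{2..N-1}. theta \<sigma> N \<mu> 1 x = theta \<sigma> N \<mu> 0 x)
       \<and> theta \<sigma> N \<mu> 1 N = \<gamma> / (1 + \<gamma>) * theta \<sigma> N \<mu> 0 N + 1 / (1 + \<gamma>) * rR 1"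
proof -
  interpret bsys \<sigma> N \<gamma> rL rR \<mu> using sig N2 gam rnn rle stat by unfold_locales
  have fo: "Ast + (real x - 1) * Bst = (1 + \<gamma>) / (1 + 2 * \<gamma>) * (A x * rL 0 + B x * rR 0)
            + \<gamma> / (1 + 2 * \<gamma>) * (A x * rL 1 + B x * rR 1)" for x
  proof -
    have n2: "real N \<ge> 2" using N2 by simp
    show ?thesis
      unfolding Ast_def Bst_def Dl_def kk_def c1_def c2_def A_def B_def D_def by (rule formula_eq[OF gam n2])
  qed
  have t0: "theta \<sigma> N \<mu> 0 x = Ast + (real x - 1) * Bst" if "1 \<le> x" "x \<le> N" for x
    by (rule theta_lim[OF ulim[OF that]])
  have t01: "theta \<sigma> N \<mu> 0 1 = Ast" using t0[of 1] N2 by simp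
  have t11: "theta \<sigma> N \<mu> 1 1 = (\<gamma> * Ast + rL 1) / (1 + \<gamma>)" by (rule theta_lim[OF w1lim])
  have t1N: "theta \<sigma> N \<mu> 1 N = (\<gamma> * (Ast + (real N - 1) * Bst) + rR 1) / (1 + \<gamma>)" by (rule theta_lim[OF wNlim])
  have t0N: "theta \<sigma> N \<mu> 0 N = Ast + (real N - 1) * Bst" using t0[of N] N2 by simp
  have t1i: "theta \<sigma> N \<mu> 1 x = Ast + (real x - 1) * Bst" if "2 \<le> x" "x + 1 \<le> N" for x
    by (rule theta_lim[OF wlim_int[OF that]])
  have g1: "1 + \<gamma> \<noteq> 0" using gam by simp
  show ?thesis
  proof (intro conjI ballI)
    fix x assume "x \<in> {1..N}"
    then show "theta \<sigma> N \<mu> 0 x = (1 + \<gamma>) / (1 + 2 * \<gamma>) * (A x * rL 0 + B x * rR 0)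
            + \<gamma> / (1 + 2 * \<gamma>) * (A x * rL 1 + B x * rR 1)" using t0 fo by simp
  next
    show "theta \<sigma> N \<mu> 1 1 = \<gamma> / (1 + \<gamma>) * theta \<sigma> N \<mu> 0 1 + 1 / (1 + \<gamma>) * rL 1"
      unfolding t11 t01 by (simp add: add_divide_distrib)
  next
    fix x assume "x \<in> {2..N-1}"
    then have "2 \<le> x" "x + 1 \<le> N" by auto
    then show "theta \<sigma> N \<mu> 1 x = theta \<sigma> N \<mu> 0 x" using t1i t0 by simp
  next
    show "theta \<sigma> N \<mu> 1 N = \<gamma> / (1 + \<gamma>) * theta \<sigma> N \<mu> 0 N + 1 / (1 + \<gamma>) * rR 1"
      unfolding t1N t0N by (simp add: add_divide_distrib)
  qed
qed


end
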